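(* Let $A$ be a commutative ring, $\mathbf f=(f_1,f_2):\{1,\dots,m\}\to\mathbb N^2$ with $f_1\equiv1$, and $M$ a finitely generated bigraded $A[\mathbf f]$-module whose homogeneous components $M_{n,d}$ are all $A$-modules of finite length. Then there exist an integer $h\ge0$ and Laurent polynomials $I_\alpha\in\mathbb Z[X,Y,X^{-1},Y^{-1}]$, indexed by subsets $\alpha\subseteq\{1,\dots,m\}$ with $\#\alpha\le h$, such that $$P_M(X,Y)=\sum_{r=0}^h\sum_{\#\alpha=r}I_\alpha(X,Y)\prod_{i\in\alpha}(1-XY^{f_2(i)})^{-1},$$ the coefficients of $I_\alpha$ are nonnegative whenever $\#\alpha=h$, and, if $M\ne0$, $I_\alpha\neq0$ for at least one $\alpha$ with $\#\alpha=h$.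
   Context: $A[\mathbf f]$ is the polynomial ring $A[T_1,\dots,T_m]$ with the $\mathbb N^2$-grading in which $T_i$ is homogeneous of bidegree $\mathbf f(i)$. A bigraded $A[\mathbf f]$-module is an $A[\mathbf f]$-module $M=\bigoplus_{(n,d)\in\mathbb Z^2}M_{n,d}$ with $A[\mathbf f]_{(n,d)}M_{(n',d')}\subseteq M_{(n+n',d+d')}$. Its Poincaré series is $P_M=\sum_{(n,d)\in\mathbb Z^2}\mathrm{len}_A(M_{n,d})X^nY^d\in\mathbb Z[[X,Y]][X^{-1},Y^{-1}]$, and $(1-XY^e)^{-1}=\sum_{k\ge0}X^kY^{ke}$. *)

theory Defs
  imports Complex_Main
begin

section \<open>Modules over A[f] = A[T_1,...,T_m] (A-module with m commuting A-linear endomorphisms)\<close>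

definition poly_module ::
  "('a::comm_ring_1 \<Rightarrow> 'b::ab_group_add \<Rightarrow> 'b) \<Rightarrow> nat \<Rightarrow> (nat \<Rightarrow> 'b \<Rightarrow> 'b) \<Rightarrow> bool" where
  "poly_module smul m T \<longleftrightarrow> module smul \<and>
     (\<forall>i\<in>{1..m}. \<forall>x y. T i (x + y) = T i x + T i y) \<and>
     (\<forall>i\<in>{1..m}. \<forall>a x. T i (smul a x) = smul a (T i x)) \<and>
     (\<forall>i\<in>{1..m}. \<forall>j\<in>{1..m}. \<forall>x. T i (T j x) = T j (T i x))"

inductive_set gen_submod ::
  "('a::comm_ring_1 \<Rightarrow> 'b::ab_group_add \<Rightarrow> 'b) \<Rightarrow> nat \<Rightarrow> (nat \<Rightarrow> 'b \<Rightarrow> 'b) \<Rightarrow> 'b set \<Rightarrow> 'b set"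
  for smul m T S where
  gen_base: "x \<in> S \<Longrightarrow> x \<in> gen_submod smul m T S"
| gen_zero: "0 \<in> gen_submod smul m T S"
| gen_add: "x \<in> gen_submod smul m T S \<Longrightarrow> y \<in> gen_submod smul m T S \<Longrightarrow> x + y \<in> gen_submod smul m T S"
| gen_smul: "x \<in> gen_submod smul m T S \<Longrightarrow> smul a x \<in> gen_submod smul m T S"
| gen_T: "i \<in> {1..m} \<Longrightarrow> x \<in> gen_submod smul m T S \<Longrightarrow> T i x \<in> gen_submod smul m T S"

definition finitely_generated ::
  "('a::comm_ring_1 \<Rightarrow> 'b::ab_group_add \<Rightarrow> 'b) \<Rightarrow> nat \<Rightarrow> (nat \<Rightarrow> 'b \<Rightarrow> 'b) \<Rightarrow> bool" where
  "finitely_generated smul m T \<longleftrightarrow> (\<exists>S. finite S \<and> gen_submod smul m T S = UNIV)"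

text \<open>Bigrading M = (direct sum) of the A-submodules G (n,d), with T_i of bidegree (1, f2 i).\<close>
definition bigraded ::
  "('a::comm_ring_1 \<Rightarrow> 'b::ab_group_add \<Rightarrow> 'b) \<Rightarrow> nat \<Rightarrow> (nat \<Rightarrow> 'b \<Rightarrow> 'b) \<Rightarrow> (nat \<Rightarrow> nat)
     \<Rightarrow> (int \<times> int \<Rightarrow> 'b set) \<Rightarrow> bool" where
  "bigraded smul m T f2 G \<longleftrightarrow>
     (\<forall>p. module.subspace smul (G p)) \<and>
     (\<forall>x. \<exists>!c :: int \<times> int \<Rightarrow> 'b. finite {p. c p \<noteq> 0} \<and> (\<forall>p. c p \<in> G p) \<and>
              x = (\<Sum>p\<in>{p. c p \<noteq> 0}. c p)) \<and>
     (\<forall>i\<in>{1..m}. \<forall>n d. \<forall>x\<in>G (n, d). T i x \<in> G (n + 1, d + int (f2 i)))"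

definition submod_chain ::
  "('a::comm_ring_1 \<Rightarrow> 'b::ab_group_add \<Rightarrow> 'b) \<Rightarrow> 'b set \<Rightarrow> nat \<Rightarrow> bool" where
  "submod_chain smul N k \<longleftrightarrow> (\<exists>C :: nat \<Rightarrow> 'b set.
      C 0 = {0} \<and> C k = N \<and> (\<forall>i<k. C i \<subset> C (Suc i)) \<and> (\<forall>i\<le>k. module.subspace smul (C i)))"

definition finite_length ::
  "('a::comm_ring_1 \<Rightarrow> 'b::ab_group_add \<Rightarrow> 'b) \<Rightarrow> 'b set \<Rightarrow> bool" where
  "finite_length smul N \<longleftrightarrow> (\<exists>B. \<forall>k. submod_chain smul N k \<longrightarrow> k \<le> B)"

definition mod_length ::
  "('a::comm_ring_1 \<Rightarrow> 'b::ab_group_add \<Rightarrow> 'b) \<Rightarrow> 'b set \<Rightarrow> nat" where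
  "mod_length smul N = Max {k. submod_chain smul N k}"

section \<open>Bivariate formal Laurent series Z[[X,Y]][X^-1,Y^-1] as coefficient functions\<close>

type_synonym lseries = "int \<times> int \<Rightarrow> int"

definition poincare_series ::
  "('a::comm_ring_1 \<Rightarrow> 'b::ab_group_add \<Rightarrow> 'b) \<Rightarrow> (int \<times> int \<Rightarrow> 'b set) \<Rightarrow> lseries" where
  "poincare_series smul G = (\<lambda>p. int (mod_length smul (G p)))"

text \<open>Cauchy product (well defined for series with supports bounded below / finite).\<close>
definition ls_mult :: "lseries \<Rightarrow> lseries \<Rightarrow> lseries" where
  "ls_mult f g = (\<lambda>(n, d). \<Sum>p\<in>{p. f p \<noteq> 0 \<and> g (n - fst p, d - snd p) \<noteq> 0}.
                          f p * g (n - fst p, d - snd p))"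

definition ls_one :: lseries where
  "ls_one = (\<lambda>(n, d). if n = 0 \<and> d = 0 then 1 else 0)"

text \<open>(1 - X Y^e)^-1 = sum_k X^k Y^(k e)\<close>
definition geom :: "nat \<Rightarrow> lseries" where
  "geom e = (\<lambda>(n, d). if n \<ge> 0 \<and> d = n * int e then 1 else 0)"

text \<open>prod over i in alpha of (1 - X Y^(f2 i))^-1\<close>
definition geom_prod :: "(nat \<Rightarrow> nat) \<Rightarrow> nat set \<Rightarrow> lseries" where
  "geom_prod f2 \<alpha> = foldr ls_mult (map (\<lambda>i. geom (f2 i)) (sorted_list_of_set \<alpha>)) ls_one"

end

theory Submission
  imports Defs
begin

definition ichain :: "('a::comm_ring_1 \<Rightarrow> 'b::ab_group_add \<Rightarrow> 'b) \<Rightarrow> 'b set \<Rightarrow> 'b set \<Rightarrow> nat \<Rightarrow> bool" where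
  "ichain smul L U k \<longleftrightarrow> (\<exists>C :: nat \<Rightarrow> 'b set.
      C 0 = L \<and> C k = U \<and> (\<forall>i<k. C i \<subset> C (Suc i)) \<and> (\<forall>i\<le>k. module.subspace smul (C i)))"

definition flen :: "('a::comm_ring_1 \<Rightarrow> 'b::ab_group_add \<Rightarrow> 'b) \<Rightarrow> 'b set \<Rightarrow> 'b set \<Rightarrow> bool" where
  "flen smul L U \<longleftrightarrow> (\<exists>B. \<forall>k. ichain smul L U k \<longrightarrow> k \<le> B)"

definition ilen :: "('a::comm_ring_1 \<Rightarrow> 'b::ab_group_add \<Rightarrow> 'b) \<Rightarrow> 'b set \<Rightarrow> 'b set \<Rightarrow> nat" where
  "ilen smul L U = Max {k. ichain smul L U k}"

definition ssum :: "'b::ab_group_add set \<Rightarrow> 'b set \<Rightarrow> 'b set" where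
  "ssum A B = {x + y | x y. x \<in> A \<and> y \<in> B}"

lemma submod_chain_ichain: "submod_chain smul N k = ichain smul {0} N k"
  unfolding submod_chain_def ichain_def by simp

lemma mod_length_ilen: "mod_length smul N = ilen smul {0} N"
  unfolding mod_length_def ilen_def submod_chain_ichain by simp

lemma finite_length_flen: "finite_length smul N = flen smul {0} N"
  unfolding finite_length_def flen_def submod_chain_ichain by simp

context module
begin

lemma ichain_0: "subspace L \<Longrightarrow> ichain scale L L 0"
  unfolding ichain_def by (rule exI[of _ "\<lambda>_. L"]) auto

lemma ichain_1: "subspace L \<Longrightarrow> subspace U \<Longrightarrow> L \<subset> U \<Longrightarrow> ichain scale L U 1"
  unfolding ichain_def by (rule exI[of _ "\<lambda>i. if i = 0 then L else U"]) (auto simp: le_Suc_eq)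

lemma ichain_01: "subspace L \<Longrightarrow> subspace U \<Longrightarrow> L \<subseteq> U \<Longrightarrow> \<exists>k. ichain scale L U k"
  by (cases "L = U") (auto intro: ichain_0 ichain_1)

lemma ichain_append:
  assumes "ichain scale L U k" "ichain scale U V l"
  shows "ichain scale L V (k + l)"
proof -
  obtain C where C: "C 0 = L" "C k = U" "\<forall>i<k. C i \<subset> C (Suc i)" "\<forall>i\<le>k. subspace (C i)"
    using assms(1) unfolding ichain_def by blast
  obtain D where D: "D 0 = U" "D l = V" "\<forall>i<l. D i \<subset> D (Suc i)" "\<forall>i\<le>l. subspace (D i)"
    using assms(2) unfolding ichain_def by blast
  show ?thesis unfolding ichain_def
  proof (rule exI[of _ "\<lambda>i. if i \<le> k then C i else D (i - k)"], intro conjI allI impI)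
    fix i assume i: "i < k + l"
    show "(if i \<le> k then C i else D (i - k)) \<subset> (if Suc i \<le> k then C (Suc i) else D (Suc i - k))"
    proof (cases "Suc i \<le> k")
      case True then show ?thesis using C(3) by auto
    next
      case False
      show ?thesis
      proof (cases "i = k")
        case True
        then have "l > 0" using i by simp
        then show ?thesis using True C(2) D(1) D(3) by auto
      next
        case False2: False
        then have "i > k" using False by simp
        then have "i - k < l" "Suc i - k = Suc (i - k)" using i by auto
        then show ?thesis using D(3) False \<open>i > k\<close> by auto
      qed
    qed
  next
    fix i assume "i \<le> k + l"
    then show "subspace (if i \<le> k then C i else D (i - k))" using C D by auto
  qed (use C D in auto)
qed

lemma ichain_subspaces:
  assumes "ichain scale L U k" shows "subspace L" "subspace U" "L \<subseteq> U"
proof -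
  obtain C where C: "C 0 = L" "C k = U" "\<forall>i<k. C i \<subset> C (Suc i)" "\<forall>i\<le>k. subspace (C i)"
    using assms(1) unfolding ichain_def by blast
  have "\<forall>i\<le>k. C 0 \<subseteq> C i"
  proof (intro allI impI)
    fix i show "i \<le> k \<Longrightarrow> C 0 \<subseteq> C i"
    proof (induction i)
      case (Suc i)
      then have "C i \<subset> C (Suc i)" using C(3) by auto
      then show ?case using Suc by auto
    qed simp
  qed
  then show "subspace L" "subspace U" "L \<subseteq> U" using C by auto
qed

lemma ilen_ge: "flen scale L U \<Longrightarrow> ichain scale L U k \<Longrightarrow> k \<le> ilen scale L U"
  unfolding flen_def ilen_def
  by (rule Max_ge) (auto intro: finite_subset[of _ "{..B}" for B])

lemma ilen_chain:
  assumes "flen scale L U" "subspace L" "subspace U" "L \<subseteq> U"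
  shows "ichain scale L U (ilen scale L U)"
proof -
  have "finite {k. ichain scale L U k}" using assms(1) unfolding flen_def
    by (auto intro: finite_subset[of _ "{..B}" for B])
  moreover have "{k. ichain scale L U k} \<noteq> {}" using ichain_01[OF assms(2-4)] by auto
  ultimately show ?thesis unfolding ilen_def using Max_in by blast
qed

lemma weak_chain:
  assumes "\<forall>i<k. D i \<subseteq> D (Suc i)" "\<forall>i\<le>k. subspace (D i)"
  shows "ichain scale (D 0) (D k) (card {i. i < k \<and> D i \<noteq> D (Suc i)})"
  using assms
proof (induction k)
  case 0
  then show ?case by (auto intro: ichain_0)
next
  case (Suc k)
  have IH: "ichain scale (D 0) (D k) (card {i. i < k \<and> D i \<noteq> D (Suc i)})"
    using Suc by auto
  show ?case
  proof (cases "D k = D (Suc k)")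
    case True
    have "{i. i < Suc k \<and> D i \<noteq> D (Suc i)} = {i. i < k \<and> D i \<noteq> D (Suc i)}"
      using True less_Suc_eq by auto
    then show ?thesis using IH True by simp
  next
    case False
    have "{i. i < Suc k \<and> D i \<noteq> D (Suc i)} = insert k {i. i < k \<and> D i \<noteq> D (Suc i)}"
      using False less_Suc_eq by auto
    then have "card {i. i < Suc k \<and> D i \<noteq> D (Suc i)} = card {i. i < k \<and> D i \<noteq> D (Suc i)} + 1"
      by simp
    moreover have "ichain scale (D k) (D (Suc k)) 1"
      using Suc.prems False by (intro ichain_1) auto
    then have "ichain scale (D 0) (D (Suc k)) (card {i. i < k \<and> D i \<noteq> D (Suc i)} + 1)"
      by (rule ichain_append[OF IH])
    ultimately show ?thesis by simp
  qed
qed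

lemma subspace_ssum: "subspace A \<Longrightarrow> subspace B \<Longrightarrow> subspace (ssum A B)"
proof -
  assume A: "subspace A" and B: "subspace B"
  show ?thesis unfolding subspace_def ssum_def
  proof (intro conjI ballI allI)
    show "0 \<in> {x + y |x y. x \<in> A \<and> y \<in> B}"
      using subspace_0[OF A] subspace_0[OF B] by (intro CollectI exI[of _ 0]) simp
  next
    fix u v assume "u \<in> {x + y |x y. x \<in> A \<and> y \<in> B}" "v \<in> {x + y |x y. x \<in> A \<and> y \<in> B}"
    then obtain x y x' y' where "u = x + y" "x \<in> A" "y \<in> B" "v = x' + y'" "x' \<in> A" "y' \<in> B" by blast
    then show "u + v \<in> {x + y |x y. x \<in> A \<and> y \<in> B}"
      using subspace_add[OF A] subspace_add[OF B]
      by (intro CollectI exI[of _ "x + x'"] exI[of _ "y + y'"]) (simp add: algebra_simps)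
  next
    fix c u assume "u \<in> {x + y |x y. x \<in> A \<and> y \<in> B}"
    then obtain x y where "u = x + y" "x \<in> A" "y \<in> B" by blast
    then show "c *s u \<in> {x + y |x y. x \<in> A \<and> y \<in> B}"
      using subspace_scale[OF A] subspace_scale[OF B]
      by (intro CollectI exI[of _ "c *s x"] exI[of _ "c *s y"]) (simp add: scale_right_distrib)
  qed
qed

lemma modular_eq:
  assumes "subspace C" "subspace C'" "subspace F" "C \<subseteq> C'" "C \<inter> F = C' \<inter> F"
    "ssum C F = ssum C' F"
  shows "C = C'"
proof
  show "C' \<subseteq> C"
  proof
    fix x assume x: "x \<in> C'"
    have "x + 0 \<in> ssum C' F" unfolding ssum_def using x subspace_0[OF assms(3)] by blast
    then have "x \<in> ssum C F" using assms(6) by simp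
    then obtain y f where yf: "x = y + f" "y \<in> C" "f \<in> F" unfolding ssum_def by blast
    have "f = x - y" using yf by simp
    moreover have "x - y \<in> C'" using x yf(2) assms(4) subspace_diff[OF assms(2)] by blast
    ultimately have "f \<in> C'" by simp
    then have "f \<in> C" using yf assms(5) by blast
    then show "x \<in> C" using yf subspace_add[OF assms(1)] by auto
  qed
qed (use assms in auto)

lemma flen_sub:
  assumes "flen scale L U" "ichain scale L' U' k" "ichain scale L L' a" "ichain scale U' U b"
  shows "k \<le> ilen scale L U"
proof -
  have "ichain scale L U (a + k + b)" using ichain_append assms by blast
  then have "a + k + b \<le> ilen scale L U" using ilen_ge assms(1) by blast
  then show ?thesis by simp
qed

lemma flen_mono:
  assumes "flen scale L U" "subspace L'" "subspace U'" "L \<subseteq> L'" "L' \<subseteq> U'" "U' \<subseteq> U"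
    and sL: "subspace L" "subspace U"
  shows "flen scale L' U'"
proof -
  obtain a where a: "ichain scale L L' a" using ichain_01[OF sL(1) assms(2,4)] by blast
  obtain b where b: "ichain scale U' U b" using ichain_01[OF assms(3) sL(2) assms(6)] by blast
  show ?thesis unfolding flen_def using flen_sub[OF assms(1) _ a b] by blast
qed

lemma ilen_add:
  assumes "flen scale L U" "subspace L" "subspace F" "subspace U" "L \<subseteq> F" "F \<subseteq> U"
  shows "ilen scale L U = ilen scale L F + ilen scale F U"
proof (rule antisym)
  have f1: "flen scale L F" using flen_mono[OF assms(1) assms(2) assms(3) order_refl assms(5) assms(6) assms(2) assms(4)] .
  have f2: "flen scale F U" using flen_mono[OF assms(1) assms(3) assms(4) assms(5) assms(6) order_refl assms(2) assms(4)] .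
  show "ilen scale L F + ilen scale F U \<le> ilen scale L U"
    using ilen_ge[OF assms(1) ichain_append[OF ilen_chain[OF f1] ilen_chain[OF f2]]] assms by auto
  obtain C where C: "C 0 = L" "C (ilen scale L U) = U" "\<forall>i<ilen scale L U. C i \<subset> C (Suc i)"
    "\<forall>i\<le>ilen scale L U. subspace (C i)"
    using ilen_chain[OF assms(1,2,4)] assms(5,6) unfolding ichain_def by blast
  define k where "k = ilen scale L U"
  define D where "D i = C i \<inter> F" for i
  define E where "E i = ssum (C i) F" for i
  have Dch: "ichain scale (D 0) (D k) (card {i. i < k \<and> D i \<noteq> D (Suc i)})"
    by (rule weak_chain) (use C assms in \<open>auto simp: D_def k_def intro: subspace_inter\<close>)
  have Ech: "ichain scale (E 0) (E k) (card {i. i < k \<and> E i \<noteq> E (Suc i)})"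
  proof (rule weak_chain)
    show "\<forall>i<k. E i \<subseteq> E (Suc i)"
    proof (intro allI impI)
      fix i assume "i < k"
      then have "C i \<subseteq> C (Suc i)" using C(3) k_def by auto
      then show "E i \<subseteq> E (Suc i)" unfolding E_def ssum_def by blast
    qed
    show "\<forall>i\<le>k. subspace (E i)" using C(4) assms(3) unfolding E_def k_def by (auto intro: subspace_ssum)
  qed
  have D0: "D 0 = L" "D k = F" using C assms by (auto simp: D_def k_def)
  have E0: "E 0 = F" "E k = U"
  proof -
    show "E 0 = F" unfolding E_def ssum_def C(1)
    proof safe
      fix x y assume "x \<in> L" "y \<in> F" then show "x + y \<in> F"
        using assms(5) subspace_add[OF assms(3)] by auto
    next
      fix x assume "x \<in> F" then show "\<exists>a b. x = a + b \<and> a \<in> L \<and> b \<in> F"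
        using subspace_0[OF assms(2)] by (intro exI[of _ 0] exI[of _ x]) auto
    qed
    show "E k = U" unfolding E_def ssum_def C(2)[folded k_def]
    proof safe
      fix x y assume "x \<in> U" "y \<in> F" then show "x + y \<in> U"
        using assms(6) subspace_add[OF assms(4)] by auto
    next
      fix x assume "x \<in> U" then show "\<exists>a b. x = a + b \<and> a \<in> U \<and> b \<in> F"
        using subspace_0[OF assms(3)] by (intro exI[of _ x] exI[of _ 0]) auto
    qed
  qed
  have "{i. i < k} \<subseteq> {i. i < k \<and> D i \<noteq> D (Suc i)} \<union> {i. i < k \<and> E i \<noteq> E (Suc i)}"
  proof
    fix i assume "i \<in> {i. i < k}"
    then have i: "i < k" by simp
    have "D i \<noteq> D (Suc i) \<or> E i \<noteq> E (Suc i)"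
    proof (rule ccontr)
      assume "\<not> (D i \<noteq> D (Suc i) \<or> E i \<noteq> E (Suc i))"
      then have de: "D i = D (Suc i)" "E i = E (Suc i)" by auto
      have "C i = C (Suc i)"
        by (rule modular_eq) (use C i assms de in \<open>auto simp: D_def E_def k_def\<close>)
      then show False using C(3) i k_def by auto
    qed
    then show "i \<in> {i. i < k \<and> D i \<noteq> D (Suc i)} \<union> {i. i < k \<and> E i \<noteq> E (Suc i)}"
      using i by auto
  qed
  then have "k \<le> card ({i. i < k \<and> D i \<noteq> D (Suc i)} \<union> {i. i < k \<and> E i \<noteq> E (Suc i)})"
  proof -
    have "card {i. i < k} \<le> card ({i. i < k \<and> D i \<noteq> D (Suc i)} \<union> {i. i < k \<and> E i \<noteq> E (Suc i)})"
      by (rule card_mono) (use \<open>{i. i < k} \<subseteq> _\<close> in auto)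
    then show ?thesis by simp
  qed
  also have "\<dots> \<le> card {i. i < k \<and> D i \<noteq> D (Suc i)} + card {i. i < k \<and> E i \<noteq> E (Suc i)}"
    by (rule card_Un_le)
  also have "\<dots> \<le> ilen scale L F + ilen scale F U"
    using ilen_ge[OF f1, of "card {i. i < k \<and> D i \<noteq> D (Suc i)}"]
      ilen_ge[OF f2, of "card {i. i < k \<and> E i \<noteq> E (Suc i)}"] Dch Ech D0 E0 by simp
  finally show "ilen scale L U \<le> ilen scale L F + ilen scale F U" by (simp add: k_def)
qed

end

definition lle :: "nat list \<Rightarrow> nat list \<Rightarrow> bool" where
  "lle xs ys = list_all2 (\<le>) xs ys"

lemma lle_Cons[simp]: "lle (x#xs) (y#ys) \<longleftrightarrow> x \<le> y \<and> lle xs ys"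
  by (simp add: lle_def)
lemma lle_Nil[simp]: "lle [] ys \<longleftrightarrow> ys = []" "lle xs [] \<longleftrightarrow> xs = []"
  by (auto simp: lle_def)
lemma lle_length: "lle xs ys \<Longrightarrow> length xs = length ys"
  by (simp add: lle_def list_all2_lengthD)
lemma lle_refl[simp]: "lle xs xs"
  by (simp add: lle_def list_all2_refl)
lemma lle_trans: "lle xs ys \<Longrightarrow> lle ys zs \<Longrightarrow> lle xs zs"
  unfolding lle_def using list_all2_trans[of "(\<le>)" "(\<le>)" "(\<le>)"] by (meson order_trans)
lemma lle_Cons1: "lle (x#xs) zs \<longleftrightarrow> (\<exists>y ys. zs = y # ys \<and> x \<le> y \<and> lle xs ys)"
  by (cases zs) auto

definition upset :: "nat list set \<Rightarrow> bool" where
  "upset U \<longleftrightarrow> (\<forall>a b. a \<in> U \<longrightarrow> lle a b \<longrightarrow> b \<in> U)"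

definition fingen :: "nat \<Rightarrow> bool" where
  "fingen n \<longleftrightarrow> (\<forall>U. U \<subseteq> {a. length a = n} \<longrightarrow> upset U \<longrightarrow>
      (\<exists>G. finite G \<and> G \<subseteq> U \<and> U = {b. \<exists>g\<in>G. lle g b}))"

lemma stab_from:
  assumes fg: "fingen n"
    and U: "\<And>k. U k \<subseteq> {a. length a = n}" "\<And>k. upset (U k)" "\<And>k. U k \<subseteq> U (Suc k)"
  shows "\<exists>K. \<forall>k\<ge>K. U k = U K"
proof -
  have mono: "k \<le> k' \<Longrightarrow> U k \<subseteq> U k'" for k k'
    using U(3) by (rule lift_Suc_mono_le)
  define W where "W = (\<Union>k. U k)"
  have "W \<subseteq> {a. length a = n}"
    using U(1) unfolding W_def by blast
  moreover have "upset W" unfolding upset_def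
  proof (intro allI impI)
    fix a b assume "a \<in> W" "lle a b"
    then obtain k where "a \<in> U k" unfolding W_def by blast
    then have "b \<in> U k" using U(2)[of k] \<open>lle a b\<close> unfolding upset_def by blast
    then show "b \<in> W" unfolding W_def by blast
  qed
  ultimately have "\<exists>G. finite G \<and> G \<subseteq> W \<and> W = {b. \<exists>g\<in>G. lle g b}"
    using fg unfolding fingen_def by blast
  then obtain G where G: "finite G" "G \<subseteq> W" "W = {b. \<exists>g\<in>G. lle g b}"
    by blast
  have "\<forall>g\<in>G. \<exists>k. g \<in> U k" using G(2) unfolding W_def by blast
  then obtain kg where kg: "\<forall>g\<in>G. g \<in> U (kg g)" by (rule bchoice[elim_format]) blast
  define K where "K = Max (insert 0 (kg ` G))"
  have "W \<subseteq> U K"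
  proof
    fix b assume "b \<in> W"
    then obtain g where g: "g \<in> G" "lle g b" using G(3) by blast
    have "kg g \<le> K" unfolding K_def using G(1) g(1) by (intro Max_ge) auto
    then have "g \<in> U K" using mono kg g(1) by blast
    then show "b \<in> U K" using U(2)[of K] g(2) unfolding upset_def by blast
  qed
  have "\<forall>k\<ge>K. U k = U K"
  proof (intro allI impI)
    fix k assume "K \<le> k"
    then have "U K \<subseteq> U k" by (rule mono)
    moreover have "U k \<subseteq> W" unfolding W_def by blast
    ultimately show "U k = U K" using \<open>W \<subseteq> U K\<close> by blast
  qed
  then show ?thesis by blast
qed

lemma fingen_all: "fingen n"
proof (induction n)
  case 0
  show ?case unfolding fingen_def
  proof (intro allI impI)
    fix U :: "nat list set" assume "U \<subseteq> {a. length a = 0}" "upset U"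
    then have "U \<subseteq> {[]}" by auto
    then show "\<exists>G. finite G \<and> G \<subseteq> U \<and> U = {b. \<exists>g\<in>G. lle g b}"
      by (intro exI[of _ U]) (auto intro: finite_subset[of _ "{[]}"] simp: lle_def)
  qed
next
  case (Suc n)
  show ?case unfolding fingen_def
  proof (intro allI impI)
    fix U :: "nat list set" assume U: "U \<subseteq> {a. length a = Suc n}" "upset U"
    define S where "S k = {y. k # y \<in> U}" for k
    have S1: "S k \<subseteq> {a. length a = n}" for k using U(1) by (auto simp: S_def)
    have S2: "upset (S k)" for k unfolding upset_def
    proof (intro allI impI)
      fix a b assume "a \<in> S k" "lle a b"
      then have "k # a \<in> U" "lle (k # a) (k # b)" by (auto simp: S_def)
      then have "k # b \<in> U" using U(2) unfolding upset_def by blast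
      then show "b \<in> S k" by (simp add: S_def)
    qed
    have S3: "S k \<subseteq> S (Suc k)" for k
    proof
      fix y assume "y \<in> S k"
      then have "k#y \<in> U" by (simp add: S_def)
      moreover have "lle (k#y) (Suc k#y)" by simp
      ultimately show "y \<in> S (Suc k)" using U(2) unfolding upset_def S_def by blast
    qed
    obtain K where K: "\<forall>k\<ge>K. S k = S K" using stab_from[of n S, OF Suc.IH S1 S2 S3] by blast
    have "\<forall>k. \<exists>G. finite G \<and> G \<subseteq> S k \<and> S k = {b. \<exists>g\<in>G. lle g b}"
    proof
      fix k show "\<exists>G. finite G \<and> G \<subseteq> S k \<and> S k = {b. \<exists>g\<in>G. lle g b}"
        using Suc.IH S1[of k] S2[of k] unfolding fingen_def by blast
    qed
    then obtain GS where GS: "\<forall>k. finite (GS k) \<and> GS k \<subseteq> S k \<and> S k = {b. \<exists>g\<in>GS k. lle g b}"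
      by (rule choice[elim_format]) blast
    have GSf: "finite (GS k)" and GSs: "GS k \<subseteq> S k" and GSe: "S k = {b. \<exists>g\<in>GS k. lle g b}" for k
      using GS by auto
    define G where "G = (\<Union>k\<le>K. (Cons k) ` GS k)"
    have "finite G" unfolding G_def using GSf by (intro finite_UN_I finite_imageI) auto
    moreover have "G \<subseteq> U"
    proof
      fix g assume "g \<in> G"
      then obtain k g0 where "g = k # g0" "g0 \<in> GS k" unfolding G_def by blast
      then show "g \<in> U" using GSs[of k] unfolding S_def by blast
    qed
    moreover have "U = {b. \<exists>g\<in>G. lle g b}"
    proof (intro equalityI subsetI)
      fix b assume b: "b \<in> U"
      then obtain x y where xy: "b = x # y" using U(1) by (cases b) auto
      have "\<exists>g\<in>G. lle g b"
      proof (cases "x \<le> K")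
        case True
        have "y \<in> S x" using b xy by (simp add: S_def)
        then obtain g where "g \<in> GS x" "lle g y" using GSe[of x] by blast
        moreover have "x # g \<in> G" unfolding G_def using True \<open>g \<in> GS x\<close> by blast
        ultimately show ?thesis using xy by (intro bexI[of _ "x#g"]) auto
      next
        case False
        have "y \<in> S x" using b xy by (simp add: S_def)
        moreover have "S x = S K" using K[rule_format, of x] False by linarith
        ultimately have "y \<in> S K" by simp
        then obtain g where "g \<in> GS K" "lle g y" using GSe[of K] by blast
        moreover have "K # g \<in> G" unfolding G_def using \<open>g \<in> GS K\<close> by blast
        ultimately show ?thesis using xy False by (intro bexI[of _ "K#g"]) auto
      qed
      then show "b \<in> {b. \<exists>g\<in>G. lle g b}" by simp
    next
      fix b assume "b \<in> {b. \<exists>g\<in>G. lle g b}"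
      then obtain g where "g \<in> G" "lle g b" by blast
      then show "b \<in> U" using \<open>G \<subseteq> U\<close> U(2) unfolding upset_def by blast
    qed
    ultimately show "\<exists>G. finite G \<and> G \<subseteq> U \<and> U = {b. \<exists>g\<in>G. lle g b}" by blast
  qed
qed

lemma stab:
  assumes "\<And>k. U k \<subseteq> {a. length a = n}" "\<And>k. upset (U k)" "\<And>k. U k \<subseteq> U (Suc k)"
  shows "\<exists>K. \<forall>k\<ge>K. U k = U K"
  using stab_from[of n U, OF fingen_all assms] .

fun incone :: "nat list \<Rightarrow> nat set \<Rightarrow> nat list \<Rightarrow> bool" where
  "incone [] B [] = True"
| "incone (c#cs) B (x#xs) = ((if 0 \<in> B then c \<le> x else x = c) \<and> incone cs {k. Suc k \<in> B} xs)"
| "incone _ _ _ = False"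

lemma incone_length: "incone c B a \<Longrightarrow> length a = length c"
  by (induction c B a rule: incone.induct) auto

lemma Suc_img_set[simp]: "{k. Suc k \<in> Suc ` B} = B" "{k. Suc k \<in> insert 0 (Suc ` B)} = B"
  by auto

lemma incone_lift1: "incone (k#c) (Suc ` B) (x#y) \<longleftrightarrow> x = k \<and> incone c B y"
  by (simp add: image_iff)

lemma incone_lift2: "incone (k#c) (insert 0 (Suc ` B)) (x#y) \<longleftrightarrow> k \<le> x \<and> incone c B y"
  by (simp add: image_iff)

definition downset :: "nat list set \<Rightarrow> bool" where
  "downset D \<longleftrightarrow> (\<forall>a b. b \<in> D \<longrightarrow> lle a b \<longrightarrow> a \<in> D)"

definition cnt :: "(nat list \<times> nat set) list \<Rightarrow> nat list \<Rightarrow> nat" where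
  "cnt C a = length (filter (\<lambda>cb. incone (fst cb) (snd cb) a) C)"

lemma length_filter_concat: "length (filter P (concat xss)) = (\<Sum>xs\<leftarrow>xss. length (filter P xs))"
  by (induction xss) auto

lemma stanley:
  "D \<subseteq> {a. length a = n} \<Longrightarrow> downset D \<Longrightarrow> \<exists>C. (\<forall>cb\<in>set C. length (fst cb) = n \<and> snd cb \<subseteq> {..<n})
      \<and> (\<forall>a. length a = n \<longrightarrow> cnt C a = (if a \<in> D then 1 else 0))"
proof (induction n arbitrary: D)
  case 0
  then have D: "D \<subseteq> {[]}" by auto
  show ?case
  proof (cases "[] \<in> D")
    case True
    then show ?thesis by (intro exI[of _ "[([], {})]"]) (auto simp: cnt_def)
  next
    case False
    then show ?thesis using D by (intro exI[of _ "[]"]) (auto simp: cnt_def)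
  qed
next
  case (Suc n)
  define S where "S k = {y. k # y \<in> D}" for k
  have S1: "S k \<subseteq> {a. length a = n}" for k using Suc.prems(1) by (auto simp: S_def)
  have S2: "downset (S k)" for k unfolding downset_def
  proof (intro allI impI)
    fix a b assume "b \<in> S k" "lle a b"
    then have "k # b \<in> D" "lle (k # a) (k # b)" by (auto simp: S_def)
    then have "k # a \<in> D" using Suc.prems(2) unfolding downset_def by blast
    then show "a \<in> S k" by (simp add: S_def)
  qed
  define U where "U k = {a. length a = n} - S k" for k
  have U1: "U k \<subseteq> {a. length a = n}" for k by (auto simp: U_def)
  have U2: "upset (U k)" for k using S2[of k] lle_length unfolding U_def upset_def downset_def by fastforce
  have U3: "U k \<subseteq> U (Suc k)" for k
  proof
    fix y assume y: "y \<in> U k"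
    have "Suc k # y \<notin> D"
    proof
      assume "Suc k # y \<in> D"
      moreover have "lle (k#y) (Suc k#y)" by simp
      ultimately have "k # y \<in> D" using Suc.prems(2) unfolding downset_def by blast
      then show False using y by (simp add: U_def S_def)
    qed
    then show "y \<in> U (Suc k)" using y by (simp add: U_def S_def)
  qed
  obtain K where K: "\<forall>k\<ge>K. U k = U K" using stab[of U n, OF U1 U2 U3] by blast
  have SK: "k \<ge> K \<Longrightarrow> S k = S K" for k using K S1[of k] S1[of K] unfolding U_def by blast
  have "\<forall>k. \<exists>C. (\<forall>cb\<in>set C. length (fst cb) = n \<and> snd cb \<subseteq> {..<n})
      \<and> (\<forall>a. length a = n \<longrightarrow> cnt C a = (if a \<in> S k then 1 else 0))"
    using Suc.IH S1 S2 by blast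
  then obtain CS where CS: "\<And>k. (\<forall>cb\<in>set (CS k). length (fst cb) = n \<and> snd cb \<subseteq> {..<n})
      \<and> (\<forall>a. length a = n \<longrightarrow> cnt (CS k) a = (if a \<in> S k then 1 else 0))" by metis
  define lift1 where "lift1 k = (\<lambda>cb::nat list \<times> nat set. (k # fst cb, Suc ` snd cb))" for k
  define lift2 where "lift2 = (\<lambda>cb::nat list \<times> nat set. (K # fst cb, insert 0 (Suc ` snd cb)))"
  define C where "C = concat (map (\<lambda>k. map (lift1 k) (CS k)) [0..<K]) @ map lift2 (CS K)"
  show ?case
  proof (intro exI[of _ C] conjI allI impI)
    show "\<forall>cb\<in>set C. length (fst cb) = Suc n \<and> snd cb \<subseteq> {..<Suc n}"
      using CS unfolding C_def lift1_def lift2_def by fastforce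
  next
    fix a :: "nat list" assume "length a = Suc n"
    then obtain x y where a: "a = x # y" "length y = n" by (cases a) auto
    have c1: "cnt (map (lift1 k) (CS k)) a = (if x = k then cnt (CS k) y else 0)" for k
      unfolding cnt_def a by (auto simp: lift1_def o_def incone_lift1)
    have c2: "cnt (map lift2 (CS K)) a = (if K \<le> x then cnt (CS K) y else 0)"
      unfolding cnt_def a by (auto simp: lift2_def o_def incone_lift2)
    have "cnt C a = (\<Sum>k\<leftarrow>[0..<K]. cnt (map (lift1 k) (CS k)) a) + cnt (map lift2 (CS K)) a"
      unfolding C_def cnt_def by (simp add: length_filter_concat o_def)
    also have "(\<Sum>k\<leftarrow>[0..<K]. cnt (map (lift1 k) (CS k)) a) = (if x < K then cnt (CS x) y else 0)"
      unfolding c1 by (simp add: sum_list_distinct_conv_sum_set sum.delta' atLeast0LessThan)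
    finally have "cnt C a = (if x < K then cnt (CS x) y else 0) + (if K \<le> x then cnt (CS K) y else 0)"
      using c2 by simp
    also have "\<dots> = (if y \<in> S x then 1 else 0)"
      using CS a SK[of x] by auto
    finally show "cnt C a = (if a \<in> D then 1 else 0)" by (simp add: S_def a)
  qed
qed


fun wdeg :: "(nat \<Rightarrow> nat) \<Rightarrow> nat \<Rightarrow> nat list \<Rightarrow> nat" where
  "wdeg f s [] = 0"
| "wdeg f s (k#ks) = k * f s + wdeg f (Suc s) ks"

lemma geom_prod_empty: "geom_prod f {} = ls_one"
  by (simp add: geom_prod_def)

lemma geom_prod_insert_min:
  assumes "finite A" "\<forall>a\<in>A. s < a"
  shows "geom_prod f (insert s A) = ls_mult (geom (f s)) (geom_prod f A)"
proof -
  have "Min (insert s A) = s" using assms by (auto intro!: Min_eqI)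
  moreover have "insert s A - {s} = A" using assms by auto
  ultimately have "sorted_list_of_set (insert s A) = s # sorted_list_of_set A"
    using sorted_list_of_set_nonempty[of "insert s A"] assms(1) by simp
  then show ?thesis by (simp add: geom_prod_def)
qed

lemma ls_mult_geom:
  assumes g0: "\<And>a b. a < 0 \<Longrightarrow> g (a, b) = 0"
  shows "ls_mult (geom e) g (n, d) = (\<Sum>k\<in>{0..nat n}. g (n - int k, d - int k * int e))"
proof -
  define h where "h = (\<lambda>k::nat. (int k, int k * int e))"
  define K0 where "K0 = {k\<in>{0..nat n}. g (n - int k, d - int k * int e) \<noteq> 0}"
  have P: "{p. geom e p \<noteq> 0 \<and> g (n - fst p, d - snd p) \<noteq> 0} = h ` K0"
  proof (intro equalityI subsetI)
    fix p assume "p \<in> {p. geom e p \<noteq> 0 \<and> g (n - fst p, d - snd p) \<noteq> 0}"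
    then have p: "fst p \<ge> 0" "snd p = fst p * int e" "g (n - fst p, d - snd p) \<noteq> 0"
      by (auto simp: geom_def split: prod.splits if_splits)
    then have "n - fst p \<ge> 0" using g0 by force
    then have "nat (fst p) \<in> K0" using p by (auto simp: K0_def)
    moreover have "p = h (nat (fst p))" using p by (auto simp: h_def prod_eq_iff)
    ultimately show "p \<in> h ` K0" by blast
  next
    fix p assume "p \<in> h ` K0"
    then show "p \<in> {p. geom e p \<noteq> 0 \<and> g (n - fst p, d - snd p) \<noteq> 0}"
      by (auto simp: h_def K0_def geom_def)
  qed
  have "ls_mult (geom e) g (n, d) = (\<Sum>p\<in>h ` K0. geom e p * g (n - fst p, d - snd p))"
    unfolding ls_mult_def by (simp add: P)
  also have "\<dots> = (\<Sum>k\<in>K0. g (n - int k, d - int k * int e))"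
    by (subst sum.reindex) (auto simp: inj_on_def h_def geom_def)
  also have "\<dots> = (\<Sum>k\<in>{0..nat n}. g (n - int k, d - int k * int e))"
    by (rule sum.mono_neutral_left) (auto simp: K0_def)
  finally show ?thesis .
qed

lemma incone_sum: "incone c B a \<Longrightarrow> sum_list c \<le> sum_list a"
  by (induction c B a rule: incone.induct) (auto split: if_splits)

lemma incone_finite: "finite {a. incone c B a \<and> sum_list a = n}"
proof (rule finite_subset)
  show "{a. incone c B a \<and> sum_list a = n} \<subseteq> {a. set a \<subseteq> {..n} \<and> length a = length c}"
    using incone_length by (auto simp: member_le_sum_list)
  show "finite {a. set a \<subseteq> {..n} \<and> length a = length c}"
    by (rule finite_lists_length_eq) simp
qed

lemma incone_finite': "finite {a. incone c B a \<and> int (sum_list a) = n \<and> P a}"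
  by (rule finite_subset[OF _ incone_finite[of c B "nat n"]]) auto

lemma cone_count:
  "B \<subseteq> {..<length c} \<Longrightarrow>
   int (card {a. incone c B a \<and> int (sum_list a) = n \<and> int (wdeg f s a) = d}) =
   geom_prod f ((+) s ` B) (n - int (sum_list c), d - int (wdeg f s c))"
proof (induction c arbitrary: B s n d)
  case Nil
  then have "B = {}" by auto
  moreover have "{a. incone [] {} a \<and> int (sum_list a) = n \<and> int (wdeg f s a) = d}
      = (if n = 0 \<and> d = 0 then {[]} else {})"
    by (auto elim: incone.elims)
  ultimately show ?case by (simp add: geom_prod_empty ls_one_def)
next
  case (Cons c0 cs)
  define B' where "B' = {k. Suc k \<in> B}"
  have B': "B' \<subseteq> {..<length cs}" using Cons.prems by (auto simp: B'_def)
  define A where "A = (+) (Suc s) ` B'"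
  define g where "g = geom_prod f A"
  have finA: "finite A" unfolding A_def using B' finite_subset by blast
  have IH: "int (card {a. incone cs B' a \<and> int (sum_list a) = n' \<and> int (wdeg f (Suc s) a) = d'})
      = g (n' - int (sum_list cs), d' - int (wdeg f (Suc s) cs))" for n' d'
    using Cons.IH[OF B'] unfolding g_def A_def by simp
  have g0: "g (a, b) = 0" if "a < 0" for a b
  proof -
    define S0 where "S0 = {as. incone cs B' as \<and> int (sum_list as) = a + int (sum_list cs)
        \<and> int (wdeg f (Suc s) as) = b + int (wdeg f (Suc s) cs)}"
    have e: "S0 = {}"
      unfolding S0_def using incone_sum[of cs B'] that by force
    have "g (a, b) = int (card S0)"
      using IH[of "a + int (sum_list cs)" "b + int (wdeg f (Suc s) cs)"] unfolding S0_def by simp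
    then show ?thesis using e by simp
  qed
  define T where "T = {a. incone (c0 # cs) B a \<and> int (sum_list a) = n \<and> int (wdeg f s a) = d}"
  define Tk where "Tk x = {as. incone cs B' as \<and> int (sum_list as) = n - int x
      \<and> int (wdeg f (Suc s) as) = d - int x * int (f s)}" for x
  show ?case
  proof (cases "0 \<in> B")
    case False
    then have BB: "(+) s ` B = A" unfolding A_def B'_def
      by (auto simp: image_iff) (metis add_Suc_shift not0_implies_Suc)
    have "T = Cons c0 ` Tk c0"
      unfolding T_def Tk_def B'_def using False
      by (auto simp: algebra_simps elim!: incone.elims[of "c0#cs"])
    then have "card T = card (Tk c0)" by (simp add: card_image)
    moreover have "int (card (Tk c0)) = g (n - int c0 - int (sum_list cs), d - int c0 * int (f s) - int (wdeg f (Suc s) cs))"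
      unfolding Tk_def IH by simp
    ultimately show ?thesis unfolding T_def[symmetric] BB g_def[symmetric]
      by (simp add: algebra_simps)
  next
    case True
    then have BB: "(+) s ` B = insert s A" unfolding A_def B'_def
      by (auto simp: image_iff) (metis add_Suc_shift not0_implies_Suc)
    define N where "N = n - int c0 - int (sum_list cs)"
    define Dd where "Dd = d - int c0 * int (f s) - int (wdeg f (Suc s) cs)"
    have TU: "T = (\<Union>k\<in>{0..nat N}. Cons (c0 + k) ` Tk (c0 + k))"
    proof (intro equalityI subsetI)
      fix a assume "a \<in> T"
      then obtain x as where a: "a = x # as" "c0 \<le> x" "incone cs B' as"
        "int x + int (sum_list as) = n" "int x * int (f s) + int (wdeg f (Suc s) as) = d"
        unfolding T_def B'_def using True by (auto elim!: incone.elims[of "c0#cs"])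
      have "sum_list cs \<le> sum_list as" using incone_sum[OF a(3)] .
      then have "x - c0 \<in> {0..nat N}" using a unfolding N_def by auto
      moreover have "as \<in> Tk (c0 + (x - c0))" using a unfolding Tk_def by (auto simp: algebra_simps)
      ultimately show "a \<in> (\<Union>k\<in>{0..nat N}. Cons (c0 + k) ` Tk (c0 + k))"
        using a by force
    next
      fix a assume "a \<in> (\<Union>k\<in>{0..nat N}. Cons (c0 + k) ` Tk (c0 + k))"
      then obtain k as where "a = (c0 + k) # as" "as \<in> Tk (c0 + k)" by blast
      then show "a \<in> T" unfolding T_def Tk_def B'_def using True
        by (auto simp: algebra_simps)
    qed
    have "card T = (\<Sum>k\<in>{0..nat N}. card (Cons (c0 + k) ` Tk (c0 + k)))"
      unfolding TU
      by (rule card_UN_disjoint) (auto simp: Tk_def intro!: finite_imageI incone_finite')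
    also have "\<dots> = (\<Sum>k\<in>{0..nat N}. card (Tk (c0 + k)))"
      by (simp add: card_image)
    finally have "int (card T) = (\<Sum>k\<in>{0..nat N}. int (card (Tk (c0 + k))))"
      by simp
    also have "\<dots> = (\<Sum>k\<in>{0..nat N}. g (N - int k, Dd - int k * int (f s)))"
      unfolding Tk_def IH N_def Dd_def by (simp add: algebra_simps)
    also have "\<dots> = ls_mult (geom (f s)) g (N, Dd)"
      using ls_mult_geom[of g, OF g0] by simp
    also have "\<dots> = geom_prod f (insert s A) (N, Dd)"
      by (subst geom_prod_insert_min) (use finA in \<open>auto simp: A_def g_def\<close>)
    finally show ?thesis unfolding T_def BB N_def Dd_def by (simp add: algebra_simps)
  qed
qed


fun tpow :: "(nat \<Rightarrow> 'b \<Rightarrow> 'b) \<Rightarrow> nat \<Rightarrow> nat list \<Rightarrow> 'b \<Rightarrow> 'b" where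
  "tpow T s [] x = x"
| "tpow T s (k#ks) x = (T s ^^ k) (tpow T (Suc s) ks x)"

lemma tpow_zeros: "tpow T s (replicate n 0) x = x"
  by (induction n arbitrary: s) auto

lemma sum_list_update_nat: "k < length xs \<Longrightarrow> sum_list (xs[k := x]) + xs ! k = sum_list xs + (x::nat)"
  by (induction xs arbitrary: k) (auto split: nat.splits)

lemma wdeg_update: "k < length xs \<Longrightarrow> wdeg f s (xs[k := xs ! k + 1]) = wdeg f s xs + f (s + k)"
  by (induction xs arbitrary: k s) (auto split: nat.splits simp: algebra_simps)

locale bgm =
  fixes smul :: "'a::comm_ring_1 \<Rightarrow> 'b::ab_group_add \<Rightarrow> 'b"
    and m :: nat
    and T :: "nat \<Rightarrow> 'b \<Rightarrow> 'b"
    and f2 :: "nat \<Rightarrow> nat"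
    and G :: "int \<times> int \<Rightarrow> 'b set"
  assumes pm: "poly_module smul m T"
    and bg: "bigraded smul m T f2 G"
begin

lemma pm': "module smul \<and>
     (\<forall>i\<in>{1..m}. \<forall>x y. T i (x + y) = T i x + T i y) \<and>
     (\<forall>i\<in>{1..m}. \<forall>a x. T i (smul a x) = smul a (T i x)) \<and>
     (\<forall>i\<in>{1..m}. \<forall>j\<in>{1..m}. \<forall>x. T i (T j x) = T j (T i x))"
  using pm unfolding poly_module_def .

sublocale module smul
  using pm' by (rule conjunct1)

lemma T_add: "i \<in> {1..m} \<Longrightarrow> T i (x + y) = T i x + T i y"
  using pm' by simp
lemma T_smul: "i \<in> {1..m} \<Longrightarrow> T i (smul c x) = smul c (T i x)"
  using pm' by simp
lemma T_comm: "i \<in> {1..m} \<Longrightarrow> j \<in> {1..m} \<Longrightarrow> T i (T j x) = T j (T i x)"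
  using pm' by simp
lemma T_zero: "i \<in> {1..m} \<Longrightarrow> T i 0 = 0"
  using T_add[of i 0 0] by simp

lemma bg': "(\<forall>p. subspace (G p)) \<and>
     (\<forall>x. \<exists>!c :: int \<times> int \<Rightarrow> 'b. finite {p. c p \<noteq> 0} \<and> (\<forall>p. c p \<in> G p) \<and>
              x = (\<Sum>p\<in>{p. c p \<noteq> 0}. c p)) \<and>
     (\<forall>i\<in>{1..m}. \<forall>n d. \<forall>x\<in>G (n, d). T i x \<in> G (n + 1, d + int (f2 i)))"
  using bg unfolding bigraded_def .

lemma G_sub: "subspace (G p)"
  using bg' by (cases p) simp
lemma G_T: "i \<in> {1..m} \<Longrightarrow> x \<in> G (n, d) \<Longrightarrow> T i x \<in> G (n + 1, d + int (f2 i))"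
  using bg' by simp
lemma G_decomp: "\<exists>!c :: int \<times> int \<Rightarrow> 'b. finite {p. c p \<noteq> 0} \<and> (\<forall>p. c p \<in> G p) \<and>
              x = (\<Sum>p\<in>{p. c p \<noteq> 0}. c p)"
  using bg' by (elim conjE) (erule allE)

lemma G_unique:
  assumes "x \<in> G p" "finite Qs" "\<forall>q\<in>Qs. y q \<in> G q" "x = (\<Sum>q\<in>Qs. y q)"
  shows "x = (if p \<in> Qs then y p else 0)"
proof -
  define c1 where "c1 = (\<lambda>q. if q = p then x else 0)"
  define c2 where "c2 = (\<lambda>q. if q \<in> Qs then y q else 0)"
  have P1: "finite {q. c1 q \<noteq> 0} \<and> (\<forall>q. c1 q \<in> G q) \<and> x = (\<Sum>q\<in>{q. c1 q \<noteq> 0}. c1 q)"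
  proof (intro conjI allI)
    show "finite {q. c1 q \<noteq> 0}" by (rule finite_subset[of _ "{p}"]) (auto simp: c1_def)
    fix q show "c1 q \<in> G q" using assms(1) subspace_0[OF G_sub] by (auto simp: c1_def)
  next
    show "x = (\<Sum>q\<in>{q. c1 q \<noteq> 0}. c1 q)"
      by (cases "x = 0") (auto simp: c1_def)
  qed
  have P2: "finite {q. c2 q \<noteq> 0} \<and> (\<forall>q. c2 q \<in> G q) \<and> x = (\<Sum>q\<in>{q. c2 q \<noteq> 0}. c2 q)"
  proof (intro conjI allI)
    show "finite {q. c2 q \<noteq> 0}" by (rule finite_subset[OF _ assms(2)]) (auto simp: c2_def)
    fix q show "c2 q \<in> G q" using assms(3) subspace_0[OF G_sub] by (auto simp: c2_def)
  next
    have "(\<Sum>q\<in>{q. c2 q \<noteq> 0}. c2 q) = (\<Sum>q\<in>Qs. c2 q)"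
      by (rule sum.mono_neutral_left) (auto simp: c2_def assms(2))
    also have "\<dots> = (\<Sum>q\<in>Qs. y q)" by (rule sum.cong) (auto simp: c2_def)
    finally show "x = (\<Sum>q\<in>{q. c2 q \<noteq> 0}. c2 q)" using assms(4) by simp
  qed
  obtain c where "finite {q. c q \<noteq> 0} \<and> (\<forall>q. c q \<in> G q) \<and> x = (\<Sum>q\<in>{q. c q \<noteq> 0}. c q)"
    and uq: "\<And>c'. finite {q. c' q \<noteq> 0} \<and> (\<forall>q. c' q \<in> G q) \<and> x = (\<Sum>q\<in>{q. c' q \<noteq> 0}. c' q) \<Longrightarrow> c' = c"
    using G_decomp[of x] by (elim ex1E) blast
  have "c1 = c" by (rule uq[OF P1])
  moreover have "c2 = c" by (rule uq[OF P2])
  ultimately have "c1 p = c2 p" by simp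
  then show ?thesis by (simp add: c1_def c2_def)
qed

lemma funpow_T_add: "i \<in> {1..m} \<Longrightarrow> (T i ^^ k) (x + y) = (T i ^^ k) x + (T i ^^ k) y"
  by (induction k) (auto simp: T_add)
lemma funpow_T_smul: "i \<in> {1..m} \<Longrightarrow> (T i ^^ k) (smul c x) = smul c ((T i ^^ k) x)"
  by (induction k) (auto simp: T_smul)
lemma funpow_T_comm: "i \<in> {1..m} \<Longrightarrow> j \<in> {1..m} \<Longrightarrow> T i ((T j ^^ k) x) = (T j ^^ k) (T i x)"
proof (induction k)
  case (Suc k)
  have "T i ((T j ^^ Suc k) x) = T j (T i ((T j ^^ k) x))"
    using T_comm[OF Suc.prems] by simp
  then show ?case using Suc by simp
qed simp
lemma funpow_T_G: "i \<in> {1..m} \<Longrightarrow> x \<in> G (n, d) \<Longrightarrow>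
    (T i ^^ k) x \<in> G (n + int k, d + int k * int (f2 i))"
proof (induction k)
  case (Suc k)
  then show ?case using G_T[OF Suc.prems(1) Suc.IH[OF Suc.prems]] by (simp add: algebra_simps)
qed simp

definition okidx :: "nat \<Rightarrow> nat list \<Rightarrow> bool" where
  "okidx s a \<longleftrightarrow> 1 \<le> s \<and> s + length a \<le> m + 1"

lemma tpow_add: "okidx s a \<Longrightarrow> tpow T s a (x + y) = tpow T s a x + tpow T s a y"
  by (induction a arbitrary: s) (auto simp: okidx_def funpow_T_add)
lemma tpow_smul: "okidx s a \<Longrightarrow> tpow T s a (smul c x) = smul c (tpow T s a x)"
  by (induction a arbitrary: s) (auto simp: okidx_def funpow_T_smul)
lemma tpow_G: "okidx s a \<Longrightarrow> x \<in> G (n, d) \<Longrightarrow>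
    tpow T s a x \<in> G (n + int (sum_list a), d + int (wdeg f2 s a))"
proof (induction a arbitrary: s n d)
  case (Cons k ks)
  have o: "okidx (Suc s) ks" "s \<in> {1..m}" using Cons.prems by (auto simp: okidx_def)
  have "tpow T (Suc s) ks x \<in> G (n + int (sum_list ks), d + int (wdeg f2 (Suc s) ks))"
    using Cons.IH[OF o(1) Cons.prems(2)] .
  from funpow_T_G[OF o(2) this, of k] show ?case by (simp add: algebra_simps)
qed simp

lemma tpow_T:
  "okidx s a \<Longrightarrow> s \<le> i \<Longrightarrow> i < s + length a \<Longrightarrow>
    T i (tpow T s a x) = tpow T s (a[i - s := a ! (i - s) + 1]) x"
proof (induction a arbitrary: s)
  case Nil then show ?case by simp
next
  case (Cons k ks)
  have i: "i \<in> {1..m}" "s \<in> {1..m}" using Cons.prems by (auto simp: okidx_def)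
  show ?case
  proof (cases "i = s")
    case True
    then show ?thesis by (simp add: funpow_swap1[of "T s" k, symmetric])
  next
    case False
    then have "Suc s \<le> i" using Cons.prems by simp
    moreover have "okidx (Suc s) ks" using Cons.prems by (auto simp: okidx_def)
    moreover have "i - s = Suc (i - Suc s)" using False Cons.prems by simp
    ultimately show ?thesis using Cons.prems Cons.IH[of "Suc s"]
      by (simp add: funpow_T_comm[OF i])
  qed
qed

end


fun lexl :: "nat list \<Rightarrow> nat list \<Rightarrow> bool" where
  "lexl (x#xs) (y#ys) = (x < y \<or> (x = y \<and> lexl xs ys))"
| "lexl _ _ = False"

lemma lexl_irrefl: "\<not> lexl a a"
  by (induction a) auto

lemma lexl_trans: "lexl a b \<Longrightarrow> lexl b c \<Longrightarrow> lexl a c"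
proof (induction a b arbitrary: c rule: lexl.induct)
  case (1 x xs y ys)
  then show ?case by (cases c) auto
qed auto

lemma lexl_total: "length a = length b \<Longrightarrow> a \<noteq> b \<Longrightarrow> lexl a b \<or> lexl b a"
proof (induction a arbitrary: b)
  case (Cons x xs)
  then show ?case by (cases b) auto
qed simp

lemma lexl_update: "lexl a b \<Longrightarrow> lexl (a[k := a ! k + 1]) (b[k := b ! k + 1])"
proof (induction a b arbitrary: k rule: lexl.induct)
  case (1 x xs y ys)
  then show ?case by (cases k) auto
qed auto

definition lless :: "nat \<times> nat list \<Rightarrow> nat \<times> nat list \<Rightarrow> bool" where
  "lless q r \<longleftrightarrow> fst q < fst r \<or> (fst q = fst r \<and> lexl (snd q) (snd r))"

lemma lless_irrefl: "\<not> lless q q"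
  by (simp add: lless_def lexl_irrefl)
lemma lless_trans: "lless q r \<Longrightarrow> lless r s \<Longrightarrow> lless q s"
  unfolding lless_def using lexl_trans by auto
lemma lless_total: "length (snd q) = length (snd r) \<Longrightarrow> q \<noteq> r \<Longrightarrow> lless q r \<or> lless r q"
  unfolding lless_def using lexl_total[of "snd q" "snd r"] by (auto simp: prod_eq_iff)

lemma ex_max:
  assumes "finite Q" "Q \<noteq> {}" "\<And>x y z. R x y \<Longrightarrow> R y z \<Longrightarrow> R x z"
    "\<And>x y. x \<in> Q \<Longrightarrow> y \<in> Q \<Longrightarrow> x \<noteq> y \<Longrightarrow> R x y \<or> R y x"
  shows "\<exists>q\<in>Q. \<forall>x\<in>Q. x \<noteq> q \<longrightarrow> R x q"
  using assms
proof (induction Q rule: finite_ne_induct)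
  case (singleton x)
  then show ?case by auto
next
  case (insert x F)
  obtain q where q: "q \<in> F" "\<forall>y\<in>F. y \<noteq> q \<longrightarrow> R y q"
    using insert.IH insert.prems by blast
  show ?case
  proof (cases "R q x")
    case True
    show ?thesis
    proof (intro bexI[of _ x] ballI impI)
      fix y assume "y \<in> insert x F" "y \<noteq> x"
      then have "y \<in> F" by simp
      then show "R y x" using q True insert.prems(1) by (cases "y = q") blast+
    qed simp
  next
    case False
    have "x \<noteq> q" using q(1) insert.hyps by auto
    then have "R x q \<or> R q x" using insert.prems(2)[of x q] q(1) by auto
    with False have "R x q" by simp
    then show ?thesis using q by auto
  qed
qed

lemma (in module) ichain_eq_0:
  assumes "ichain scale L L k" shows "k = 0"
proof (rule ccontr)
  assume k: "k \<noteq> 0"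
  obtain C where C: "C 0 = L" "C k = L" "\<forall>i<k. C i \<subset> C (Suc i)"
    using assms unfolding ichain_def by blast
  have "\<forall>i. 1 \<le> i \<and> i \<le> k \<longrightarrow> C 1 \<subseteq> C i"
  proof (intro allI impI)
    fix i show "1 \<le> i \<and> i \<le> k \<Longrightarrow> C 1 \<subseteq> C i"
    proof (induction i)
      case (Suc i)
      show ?case
      proof (cases "i = 0")
        case True then show ?thesis by simp
      next
        case False
        then have "C 1 \<subseteq> C i" using Suc by simp
        moreover have "C i \<subset> C (Suc i)" using C(3) Suc.prems by simp
        ultimately show ?thesis by blast
      qed
    qed simp
  qed
  then have "C 1 \<subseteq> C k" using k by simp
  moreover have "C 0 \<subset> C 1" using C(3) k by simp
  ultimately show False using C by blast
qed

lemma (in module) ilen_refl: "subspace L \<Longrightarrow> ilen scale L L = 0"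
proof -
  assume "subspace L"
  have "{k. ichain scale L L k} = {0}" using ichain_eq_0 ichain_0[OF \<open>subspace L\<close>] by blast
  then show ?thesis unfolding ilen_def by simp
qed

lemma (in module) filt_sum:
  fixes R :: "'c \<Rightarrow> 'c \<Rightarrow> bool" and v :: "'c \<Rightarrow> 'b"
  assumes "finite Q" "\<And>x. \<not> R x x" "\<And>x y z. R x y \<Longrightarrow> R y z \<Longrightarrow> R x z"
    "\<And>x y. x \<in> Q \<Longrightarrow> y \<in> Q \<Longrightarrow> x \<noteq> y \<Longrightarrow> R x y \<or> R y x"
    "flen scale {0} (span (v ` Q))"
  shows "ilen scale {0} (span (v ` Q)) =
    (\<Sum>q\<in>Q. ilen scale (span (v ` {x\<in>Q. R x q})) (span (v ` {x\<in>Q. R x q \<or> x = q})))"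
  using assms
proof (induction "card Q" arbitrary: Q)
  case 0
  then have "Q = {}" by simp
  then show ?case using ilen_refl[of "{0}"] by simp
next
  case (Suc n)
  then have Qne: "Q \<noteq> {}" by auto
  obtain qm where qm: "qm \<in> Q" "\<forall>x\<in>Q. x \<noteq> qm \<longrightarrow> R x qm"
    using ex_max[OF Suc.prems(1) Qne, of R] Suc.prems(3,4) by blast
  define Q' where "Q' = Q - {qm}"
  have cQ': "n = card Q'" using Suc.hyps(2) qm(1) Suc.prems(1) by (simp add: Q'_def)
  have fQ': "finite Q'" using Suc.prems(1) by (simp add: Q'_def)
  have sub: "span (v ` Q') \<subseteq> span (v ` Q)" by (rule span_mono) (auto simp: Q'_def)
  have fl': "flen scale {0} (span (v ` Q'))"
    by (rule flen_mono[OF Suc.prems(5)]) (use sub span_zero in auto)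
  have IH: "ilen scale {0} (span (v ` Q')) =
    (\<Sum>q\<in>Q'. ilen scale (span (v ` {x\<in>Q'. R x q})) (span (v ` {x\<in>Q'. R x q \<or> x = q})))"
    by (rule Suc.hyps(1)[OF cQ' fQ']) (use Suc.prems fl' in \<open>auto simp: Q'_def\<close>)
  have e1: "{x\<in>Q. R x q} = {x\<in>Q'. R x q}" "{x\<in>Q. R x q \<or> x = q} = {x\<in>Q'. R x q \<or> x = q}"
    if "q \<in> Q'" for q
  proof -
    have "\<not> R qm q" using that qm Suc.prems(2,3) unfolding Q'_def by blast
    then show "{x\<in>Q. R x q} = {x\<in>Q'. R x q}" "{x\<in>Q. R x q \<or> x = q} = {x\<in>Q'. R x q \<or> x = q}"
      using that unfolding Q'_def by auto
  qed
  have e2: "{x\<in>Q. R x qm} = Q'" "{x\<in>Q. R x qm \<or> x = qm} = Q"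
    using qm Suc.prems(2) unfolding Q'_def by auto
  have "ilen scale {0} (span (v ` Q)) = ilen scale {0} (span (v ` Q')) + ilen scale (span (v ` Q')) (span (v ` Q))"
    by (rule ilen_add[OF Suc.prems(5)]) (use sub span_zero in auto)
  also have "\<dots> = (\<Sum>q\<in>Q'. ilen scale (span (v ` {x\<in>Q. R x q})) (span (v ` {x\<in>Q. R x q \<or> x = q})))
      + ilen scale (span (v ` {x\<in>Q. R x qm})) (span (v ` {x\<in>Q. R x qm \<or> x = qm}))"
    unfolding IH e2 by (simp add: e1 cong: sum.cong)
  also have "\<dots> = (\<Sum>q\<in>Q. ilen scale (span (v ` {x\<in>Q. R x q})) (span (v ` {x\<in>Q. R x q \<or> x = q})))"
    unfolding Q'_def by (simp add: sum.remove[OF Suc.prems(1) qm(1)] add.commute)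
  finally show ?case .
qed

lemma gen_sum: "finite A \<Longrightarrow> (\<forall>a\<in>A. f a \<in> gen_submod smul m T S) \<Longrightarrow> sum f A \<in> gen_submod smul m T S"
  by (induction A rule: finite_induct) (auto intro: gen_submod.intros)

lemma gen_sub: "S \<subseteq> gen_submod smul m T S' \<Longrightarrow> gen_submod smul m T S \<subseteq> gen_submod smul m T S'"
proof
  fix x assume S: "S \<subseteq> gen_submod smul m T S'" and "x \<in> gen_submod smul m T S"
  from this(2) show "x \<in> gen_submod smul m T S'"
    by induction (use S in \<open>auto intro: gen_submod.intros\<close>)
qed

context bgm
begin

lemma hom_gens:
  assumes "finitely_generated smul m T"
  shows "\<exists>hs. (\<forall>hq\<in>set hs. fst hq \<in> G (snd hq)) \<and> gen_submod smul m T (fst ` set hs) = UNIV"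
proof -
  obtain S where S: "finite S" "gen_submod smul m T S = UNIV"
    using assms unfolding finitely_generated_def by blast
  have "\<forall>x. \<exists>c. finite {p. c p \<noteq> 0} \<and> (\<forall>p. c p \<in> G p) \<and> x = (\<Sum>p\<in>{p. c p \<noteq> 0}. c p)"
  proof
    fix x show "\<exists>c. finite {p. c p \<noteq> 0} \<and> (\<forall>p. c p \<in> G p) \<and> x = (\<Sum>p\<in>{p. c p \<noteq> 0}. c p)"
      using G_decomp[of x] by (rule ex1_implies_ex)
  qed
  then obtain cs where cs: "\<forall>x. finite {p. cs x p \<noteq> 0} \<and> (\<forall>p. cs x p \<in> G p) \<and> x = (\<Sum>p\<in>{p. cs x p \<noteq> 0}. cs x p)"
    by (rule choice[elim_format]) blast
  define H where "H = (\<Union>s\<in>S. (\<lambda>p. (cs s p, p)) ` {p. cs s p \<noteq> 0})"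
  have fH: "finite H" unfolding H_def using S(1) cs by (intro finite_UN_I finite_imageI) auto
  obtain hs where hs: "set hs = H" using finite_list[OF fH] by blast
  have "S \<subseteq> gen_submod smul m T (fst ` H)"
  proof
    fix s assume s: "s \<in> S"
    have "s = (\<Sum>p\<in>{p. cs s p \<noteq> 0}. cs s p)" using cs by blast
    also have "\<dots> \<in> gen_submod smul m T (fst ` H)"
    proof (rule gen_sum)
      show "finite {p. cs s p \<noteq> 0}" using cs by blast
      show "\<forall>a\<in>{p. cs s p \<noteq> 0}. cs s a \<in> gen_submod smul m T (fst ` H)"
      proof
        fix p assume "p \<in> {p. cs s p \<noteq> 0}"
        then have "(cs s p, p) \<in> H" using s unfolding H_def by blast
        then have "cs s p \<in> fst ` H" by (metis fst_conv image_eqI)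
        then show "cs s p \<in> gen_submod smul m T (fst ` H)" by (rule gen_base)
      qed
    qed
    finally show "s \<in> gen_submod smul m T (fst ` H)" .
  qed
  then have "gen_submod smul m T (fst ` H) = UNIV" using gen_sub S(2) by blast
  moreover have "\<forall>hq\<in>set hs. fst hq \<in> G (snd hq)" unfolding hs H_def using cs by force
  ultimately show ?thesis using hs by blast
qed

end


locale bgh = bgm +
  fixes hs :: "('b \<times> (int \<times> int)) list"
  assumes hs_G: "\<forall>hq\<in>set hs. fst hq \<in> G (snd hq)"
    and hs_gen: "gen_submod smul m T (fst ` set hs) = UNIV"
begin

definition vl :: "nat \<times> nat list \<Rightarrow> 'b" where
  "vl q = tpow T 1 (snd q) (fst (hs ! fst q))"

definition ldeg :: "nat \<times> nat list \<Rightarrow> int \<times> int" where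
  "ldeg q = (fst (snd (hs ! fst q)) + int (sum_list (snd q)), snd (snd (hs ! fst q)) + int (wdeg f2 1 (snd q)))"

definition labs :: "(nat \<times> nat list) set" where
  "labs = {q. fst q < length hs \<and> length (snd q) = m}"

definition Lp :: "int \<times> int \<Rightarrow> (nat \<times> nat list) set" where
  "Lp p = {q \<in> labs. ldeg q = p}"

lemma hs_nth: "j < length hs \<Longrightarrow> fst (hs ! j) \<in> G (fst (snd (hs ! j)), snd (snd (hs ! j)))"
proof -
  assume "j < length hs"
  then have "hs ! j \<in> set hs" by simp
  then have "fst (hs ! j) \<in> G (snd (hs ! j))" using hs_G by blast
  then show ?thesis by simp
qed

lemma hs_nth': "j < length hs \<Longrightarrow> fst (hs ! j) \<in> G (snd (hs ! j))"
  using hs_nth by simp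

lemma vl_G: "q \<in> labs \<Longrightarrow> vl q \<in> G (ldeg q)"
  unfolding vl_def ldeg_def labs_def
  by (rule tpow_G) (auto simp: okidx_def intro!: hs_nth hs_nth')

lemma vl_T: "q \<in> labs \<Longrightarrow> k < m \<Longrightarrow> T (Suc k) (vl q) = vl (fst q, (snd q)[k := snd q ! k + 1])"
  unfolding vl_def labs_def using tpow_T[of 1 "snd q" "Suc k"] by (auto simp: okidx_def)

lemma labs_upd: "q \<in> labs \<Longrightarrow> (fst q, (snd q)[k := snd q ! k + 1]) \<in> labs"
  unfolding labs_def by auto

lemma ldeg_upd: "q \<in> labs \<Longrightarrow> k < m \<Longrightarrow>
   ldeg (fst q, (snd q)[k := snd q ! k + 1]) = (fst (ldeg q) + 1, snd (ldeg q) + int (f2 (Suc k)))"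
  unfolding ldeg_def labs_def
  using sum_list_update_nat[of k "snd q" "snd q ! k + 1"] wdeg_update[of k "snd q" f2 1]
  by auto

lemma span_all: "span (vl ` labs) = UNIV"
proof -
  have "gen_submod smul m T (fst ` set hs) \<subseteq> span (vl ` labs)"
  proof
    fix x assume "x \<in> gen_submod smul m T (fst ` set hs)"
    then show "x \<in> span (vl ` labs)"
    proof induction
      case (gen_base x)
      then obtain j where j: "j < length hs" "x = fst (hs ! j)"
        by (metis imageE in_set_conv_nth)
      have "x = vl (j, replicate m 0)" unfolding vl_def using j by (simp add: tpow_zeros)
      moreover have "(j, replicate m 0) \<in> labs" using j by (simp add: labs_def)
      ultimately show ?case by (intro span_base) blast
    next
      case gen_zero then show ?case by (rule span_zero)
    next
      case (gen_add x y) then show ?case by (simp add: span_add)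
    next
      case (gen_smul x a) then show ?case by (simp add: span_scale)
    next
      case (gen_T i x)
      have "span (vl ` labs) \<subseteq> {y. T i y \<in> span (vl ` labs)}"
      proof (rule span_minimal)
        show "vl ` labs \<subseteq> {y. T i y \<in> span (vl ` labs)}"
        proof
          fix y assume "y \<in> vl ` labs"
          then obtain q where q: "q \<in> labs" "y = vl q" by blast
          obtain k where k: "i = Suc k" "k < m" using gen_T(1) by (cases i) auto
          have "T i y = vl (fst q, (snd q)[k := snd q ! k + 1])" using vl_T q k by simp
          then show "y \<in> {y. T i y \<in> span (vl ` labs)}" using labs_upd[OF q(1)]
            by (auto intro!: span_base)
        qed
        show "subspace {y. T i y \<in> span (vl ` labs)}" unfolding subspace_def
          using T_zero[OF gen_T(1)] T_add[OF gen_T(1)] T_smul[OF gen_T(1)]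
          by (auto intro: span_zero span_add span_scale)
      qed
      then show ?case using gen_T by blast
    qed
  qed
  then show ?thesis using hs_gen by auto
qed

lemma span_Lp: "G p = span (vl ` Lp p)"
proof
  show "span (vl ` Lp p) \<subseteq> G p"
    by (rule span_minimal) (use vl_G G_sub in \<open>auto simp: Lp_def\<close>)
  show "G p \<subseteq> span (vl ` Lp p)"
  proof
    fix x assume xG: "x \<in> G p"
    have "x \<in> span (vl ` labs)" using span_all by simp
    then obtain t r where tr: "finite t" "t \<subseteq> vl ` labs" "x = (\<Sum>a\<in>t. smul (r a) a)"
      unfolding span_explicit by blast
    have "\<forall>v\<in>t. \<exists>q. q \<in> labs \<and> vl q = v" using tr(2) by blast
    then obtain lv where lv: "\<forall>v\<in>t. lv v \<in> labs \<and> vl (lv v) = v"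
      by (rule bchoice[elim_format]) blast
    define dg where "dg v = ldeg (lv v)" for v
    define y where "y q = (\<Sum>v\<in>{v\<in>t. dg v = q}. smul (r v) v)" for q
    have "x = (\<Sum>q\<in>dg ` t. y q)"
      unfolding tr(3) y_def by (rule sum.group[symmetric]) (use tr(1) in auto)
    moreover have "\<forall>q\<in>dg ` t. y q \<in> G q"
    proof
      fix q assume "q \<in> dg ` t"
      show "y q \<in> G q" unfolding y_def
      proof (rule subspace_sum[OF G_sub])
        fix v assume "v \<in> {v\<in>t. dg v = q}"
        then have "v \<in> G q" using lv vl_G[of "lv v"] by (auto simp: dg_def)
        then show "smul (r v) v \<in> G q" by (rule subspace_scale[OF G_sub])
      qed
    qed
    ultimately have "x = (if p \<in> dg ` t then y p else 0)"
      using G_unique[OF xG] tr(1) by blast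
    moreover have "y p \<in> span (vl ` Lp p)" unfolding y_def
    proof (rule span_sum)
      fix v assume v: "v \<in> {v\<in>t. dg v = p}"
      then have "lv v \<in> Lp p" using lv by (auto simp: Lp_def dg_def)
      then have "v \<in> vl ` Lp p" using lv v by (metis (mono_tags, lifting) image_eqI mem_Collect_eq)
      then show "smul (r v) v \<in> span (vl ` Lp p)" by (intro span_scale span_base)
    qed
    ultimately show "x \<in> span (vl ` Lp p)" using span_zero by auto
  qed
qed

lemma finite_Lp: "finite (Lp p)"
proof (rule finite_subset)
  define N where "N j = nat (fst p - fst (snd (hs ! j)))" for j
  show "Lp p \<subseteq> (\<Union>j<length hs. {j} \<times> {a. set a \<subseteq> {..N j} \<and> length a = m})"
  proof
    fix q assume q: "q \<in> Lp p"
    then have "sum_list (snd q) = N (fst q)"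
      unfolding N_def Lp_def ldeg_def by auto
    then have "set (snd q) \<subseteq> {..N (fst q)}" by (auto dest: member_le_sum_list)
    then show "q \<in> (\<Union>j<length hs. {j} \<times> {a. set a \<subseteq> {..N j} \<and> length a = m})"
      using q unfolding Lp_def labs_def by (cases q) auto
  qed
  show "finite (\<Union>j<length hs. {j} \<times> {a. set a \<subseteq> {..N j} \<and> length a = m})"
    by (intro finite_UN_I finite_cartesian_product finite_lists_length_eq) auto
qed

definition ell :: "nat \<times> nat list \<Rightarrow> nat" where
  "ell q = ilen smul (span (vl ` {x\<in>Lp (ldeg q). lless x q})) (span (vl ` {x\<in>Lp (ldeg q). lless x q \<or> x = q}))"

lemma ml_sum:
  assumes "flen smul {0} (G p)"
  shows "ilen smul {0} (G p) = (\<Sum>q\<in>Lp p. ell q)"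
proof -
  have "ilen smul {0} (span (vl ` Lp p)) =
    (\<Sum>q\<in>Lp p. ilen smul (span (vl ` {x\<in>Lp p. lless x q})) (span (vl ` {x\<in>Lp p. lless x q \<or> x = q})))"
  proof (rule filt_sum)
    show "finite (Lp p)" by (rule finite_Lp)
    show "\<And>x. \<not> lless x x" by (rule lless_irrefl)
    show "\<And>x y z. lless x y \<Longrightarrow> lless y z \<Longrightarrow> lless x z" by (rule lless_trans)
    show "\<And>x y. x \<in> Lp p \<Longrightarrow> y \<in> Lp p \<Longrightarrow> x \<noteq> y \<Longrightarrow> lless x y \<or> lless y x"
      by (rule lless_total) (auto simp: Lp_def labs_def)
    show "flen smul {0} (span (vl ` Lp p))" using assms span_Lp by simp
  qed
  also have "\<dots> = (\<Sum>q\<in>Lp p. ell q)"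
    by (rule sum.cong) (auto simp: ell_def Lp_def)
  finally show ?thesis using span_Lp by simp
qed

end


lemma chain_mono_aux:
  assumes "\<forall>i<k. C i \<subset> C (Suc i)" "i \<le> j" "j \<le> k"
  shows "C i \<subseteq> C j"
  using assms(2,3)
proof (induction j)
  case (Suc j)
  show ?case
  proof (cases "i = Suc j")
    case False
    then have "C i \<subseteq> C j" using Suc by simp
    moreover have "C j \<subset> C (Suc j)" using assms(1) Suc.prems by simp
    ultimately show ?thesis by blast
  qed simp
qed simp

lemma (in module) shift_len:
  fixes Tk :: "'b \<Rightarrow> 'b"
  assumes Tadd: "\<And>x y. Tk (x + y) = Tk x + Tk y" and Tsm: "\<And>c x. Tk (scale c x) = scale c (Tk x)"
    and sFl: "subspace Fl" and sFl': "subspace Fl'"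
    and Fu: "Fu = span (insert v Fl)" and Fu': "Fu' = span (insert v' Fl')"
    and Tv: "Tk v = v'" and TFl: "\<And>x. x \<in> Fl \<Longrightarrow> Tk x \<in> Fl'"
    and fl: "flen scale Fl Fu" and ch: "ichain scale Fl' Fu' r"
  shows "r \<le> ilen scale Fl Fu"
proof -
  have Fu_eq: "Fu = {x. \<exists>k. x - scale k v \<in> Fl}"
    unfolding Fu span_insert span_eq_iff[THEN iffD2, OF sFl] ..
  have Fu'_eq: "Fu' = {x. \<exists>k. x - scale k v' \<in> Fl'}"
    unfolding Fu' span_insert span_eq_iff[THEN iffD2, OF sFl'] ..
  have v'Fu': "v' \<in> Fu'" unfolding Fu' by (rule span_base) simp
  have sFu: "subspace Fu" unfolding Fu by simp
  define I where "I W = {c. scale c v' \<in> W}" for W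
  define phi where "phi W = {f + scale c v | f c. f \<in> Fl \<and> c \<in> I W}" for W
  have a: "subspace (phi W)" if "subspace W" for W
    unfolding subspace_def
  proof (intro conjI ballI allI)
    show "0 \<in> phi W" unfolding phi_def I_def
      using subspace_0[OF sFl] subspace_0[OF that] by (auto intro!: exI[of _ 0])
  next
    fix x y assume "x \<in> phi W" "y \<in> phi W"
    then obtain f c g d where fc: "x = f + scale c v" "f \<in> Fl" "c \<in> I W" "y = g + scale d v" "g \<in> Fl" "d \<in> I W"
      unfolding phi_def by blast
    have "c + d \<in> I W" using fc subspace_add[OF that] unfolding I_def by (simp add: scale_left_distrib)
    moreover have "f + g \<in> Fl" using fc subspace_add[OF sFl] by simp
    moreover have "x + y = (f + g) + scale (c + d) v" using fc by (simp add: scale_left_distrib algebra_simps)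
    ultimately show "x + y \<in> phi W" unfolding phi_def by blast
  next
    fix e x assume "x \<in> phi W"
    then obtain f c where fc: "x = f + scale c v" "f \<in> Fl" "c \<in> I W"
      unfolding phi_def by blast
    have "e * c \<in> I W" using fc subspace_scale[OF that, of "scale c v'" e] unfolding I_def by simp
    moreover have "scale e f \<in> Fl" using fc subspace_scale[OF sFl] by simp
    moreover have "scale e x = scale e f + scale (e * c) v" using fc by (simp add: scale_right_distrib)
    ultimately show "scale e x \<in> phi W" unfolding phi_def by blast
  qed
  have b: "Fl \<subseteq> phi W" if "subspace W" for W
  proof
    fix f assume "f \<in> Fl"
    moreover have "0 \<in> I W" unfolding I_def using subspace_0[OF that] by simp
    moreover have "f = f + scale 0 v" by simp
    ultimately show "f \<in> phi W" unfolding phi_def by blast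
  qed
  have d: "phi Fu' = Fu"
  proof
    show "phi Fu' \<subseteq> Fu"
    proof
      fix x assume "x \<in> phi Fu'"
      then obtain f c where "x = f + scale c v" "f \<in> Fl" unfolding phi_def by blast
      then have "x - scale c v \<in> Fl" by simp
      then show "x \<in> Fu" unfolding Fu_eq by blast
    qed
    show "Fu \<subseteq> phi Fu'"
    proof
      fix x assume "x \<in> Fu"
      then obtain k where "x - scale k v \<in> Fl" unfolding Fu_eq by blast
      moreover have "k \<in> I Fu'" unfolding I_def using subspace_scale[OF _ v'Fu'] Fu' by simp
      moreover have "x = (x - scale k v) + scale k v" by simp
      ultimately show "x \<in> phi Fu'" unfolding phi_def by blast
    qed
  qed
  have e: "phi W1 \<subseteq> phi W2" if "W1 \<subseteq> W2" for W1 W2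
    using that unfolding phi_def I_def by blast
  have f: "phi W1 \<noteq> phi W2" if W: "subspace W1" "subspace W2" "W1 \<subset> W2" "Fl' \<subseteq> W1" "W2 \<subseteq> Fu'" for W1 W2
  proof
    assume eq: "phi W1 = phi W2"
    have "W2 \<subseteq> W1"
    proof
      fix w assume w: "w \<in> W2"
      then obtain c where c: "w - scale c v' \<in> Fl'" using W(5) unfolding Fu'_eq by blast
      have "scale c v' = w - (w - scale c v')" by simp
      also have "\<dots> \<in> W2" using w c W(3,4) subspace_diff[OF W(2)] by blast
      finally have "c \<in> I W2" unfolding I_def by simp
      then have "0 + scale c v \<in> phi W2" unfolding phi_def using subspace_0[OF sFl] by blast
      then have "scale c v \<in> phi W1" using eq by simp
      then obtain f c1 where fc: "scale c v = f + scale c1 v" "f \<in> Fl" "c1 \<in> I W1"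
        unfolding phi_def by blast
      have "scale (c - c1) v = f" using fc(1) by (simp add: scale_left_diff_distrib)
      then have "scale (c - c1) v' \<in> Fl'" using TFl[OF fc(2)] Tsm Tv by metis
      then have "scale (c - c1) v' \<in> W1" using W(4) by blast
      moreover have "scale c1 v' \<in> W1" using fc(3) unfolding I_def by simp
      ultimately have "scale (c - c1) v' + scale c1 v' \<in> W1" using subspace_add[OF W(1)] by blast
      then have cW1: "scale c v' \<in> W1" by (simp add: scale_left_diff_distrib)
      have "w = (w - scale c v') + scale c v'" by simp
      also have "\<dots> \<in> W1" using cW1 c W(4) subspace_add[OF W(1)] by blast
      finally show "w \<in> W1" .
    qed
    then show False using W(3) by blast
  qed
  obtain C where C: "C 0 = Fl'" "C r = Fu'" "\<forall>i<r. C i \<subset> C (Suc i)" "\<forall>i\<le>r. subspace (C i)"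
    using ch unfolding ichain_def by blast
  have Cin: "Fl' \<subseteq> C i \<and> C i \<subseteq> Fu'" if "i \<le> r" for i
    using chain_mono_aux[OF C(3), of 0 i] chain_mono_aux[OF C(3), of i r] that C(1,2) by simp
  have D: "ichain scale (phi (C 0)) Fu r" unfolding ichain_def
  proof (intro exI[of _ "\<lambda>i. phi (C i)"] conjI allI impI)
    show "phi (C r) = Fu" using C(2) d by simp
  next
    fix i assume i: "i < r"
    have "phi (C i) \<subseteq> phi (C (Suc i))" using e C(3) i by blast
    moreover have "phi (C i) \<noteq> phi (C (Suc i))"
      by (rule f) (use C(3,4) Cin i in auto)
    ultimately show "phi (C i) \<subset> phi (C (Suc i))" by blast
  next
    fix i assume "i \<le> r" then show "subspace (phi (C i))" using a C(4) by blast
  qed simp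
  obtain a0 where "ichain scale Fl (phi (C 0)) a0"
    using ichain_01[OF sFl a[OF C(4)[rule_format, of 0]] b[OF C(4)[rule_format, of 0]]] by auto
  from ichain_append[OF this D] have "a0 + r \<le> ilen scale Fl Fu" using ilen_ge[OF fl] by blast
  then show ?thesis by simp
qed


lemma lle_sum: "lle a b \<Longrightarrow> sum_list a \<le> sum_list b"
  unfolding lle_def by (induction rule: list_all2_induct) auto

lemma lle_neq: "lle a b \<Longrightarrow> a \<noteq> b \<Longrightarrow> \<exists>k<length a. a ! k < b ! k"
  unfolding lle_def list_all2_conv_all_nth by (metis le_neq_implies_less nth_equalityI)

lemma lle_dec: "lle a b \<Longrightarrow> k < length b \<Longrightarrow> a ! k < b ! k \<Longrightarrow> lle a (b[k := b ! k - 1])"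
  unfolding lle_def list_all2_conv_all_nth by (auto simp: nth_list_update)

lemma (in module) span_insert_span: "span (insert a (span B)) = span (insert a B)"
  unfolding span_insert span_span ..

lemma (in bgm) T_span:
  assumes "i \<in> {1..m}" "\<And>y. y \<in> A \<Longrightarrow> T i y \<in> span B" "x \<in> span A"
  shows "T i x \<in> span B"
proof -
  have "span A \<subseteq> {y. T i y \<in> span B}"
  proof (rule span_minimal)
    show "A \<subseteq> {y. T i y \<in> span B}" using assms(2) by blast
    show "subspace {y. T i y \<in> span B}" unfolding subspace_def
      using T_zero[OF assms(1)] T_add[OF assms(1)] T_smul[OF assms(1)]
      by (auto intro: span_zero span_add span_scale)
  qed
  then show ?thesis using assms(3) by blast
qed

locale bghf = bgh +
  assumes flG: "\<forall>p. flen smul {0} (G p)"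
begin

definition upd :: "nat \<times> nat list \<Rightarrow> nat \<Rightarrow> nat \<times> nat list" where
  "upd q k = (fst q, (snd q)[k := snd q ! k + 1])"

lemma lless_upd: "lless x q \<Longrightarrow> lless (upd x k) (upd q k)"
  unfolding lless_def upd_def using lexl_update by auto

lemma flen_sub:
  assumes "A \<subseteq> B" "B \<subseteq> Lp p"
  shows "flen smul (span (vl ` A)) (span (vl ` B))"
proof (rule flen_mono[OF flG[rule_format, of p]])
  show "span (vl ` A) \<subseteq> span (vl ` B)" using assms(1) by (intro span_mono) blast
  show "span (vl ` B) \<subseteq> G p" unfolding span_Lp[of p] using assms(2) by (intro span_mono) blast
qed (auto simp: span_zero G_sub)

lemma ell_mono1:
  assumes q: "q \<in> labs" and k: "k < m"
  shows "ell (upd q k) \<le> ell q"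
proof -
  define p where "p = ldeg q"
  define q' where "q' = upd q k"
  define p' where "p' = ldeg q'"
  define S where "S = {x\<in>Lp p. lless x q}"
  define S' where "S' = {x\<in>Lp p'. lless x q'}"
  have qL: "q \<in> Lp p" using q by (simp add: Lp_def p_def)
  have q'labs: "q' \<in> labs" using labs_upd[OF q] by (simp add: q'_def upd_def)
  have q'L: "q' \<in> Lp p'" using q'labs by (simp add: Lp_def p'_def)
  have e1: "{x\<in>Lp p. lless x q \<or> x = q} = insert q S" using qL by (auto simp: S_def)
  have e2: "{x\<in>Lp p'. lless x q' \<or> x = q'} = insert q' S'" using q'L by (auto simp: S'_def)
  have ellq: "ell q = ilen smul (span (vl ` S)) (span (insert (vl q) (span (vl ` S))))"
    unfolding ell_def p_def[symmetric] e1 S_def[symmetric] span_insert_span by simp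
  have ellq': "ell q' = ilen smul (span (vl ` S')) (span (insert (vl q') (span (vl ` S'))))"
    unfolding ell_def p'_def[symmetric] e2 S'_def[symmetric] span_insert_span by simp
  have p': "p' = (fst p + 1, snd p + int (f2 (Suc k)))"
    unfolding p'_def q'_def upd_def p_def using ldeg_upd[OF q k] .
  have Sin: "insert q S \<subseteq> Lp p" using qL by (auto simp: S_def)
  have S'in: "insert q' S' \<subseteq> Lp p'" using q'L by (auto simp: S'_def)
  have fl: "flen smul (span (vl ` S)) (span (insert (vl q) (span (vl ` S))))"
    using flen_sub[OF subset_insertI Sin] by (simp add: span_insert_span)
  have fl': "flen smul (span (vl ` S')) (span (insert (vl q') (span (vl ` S'))))"
    using flen_sub[OF subset_insertI S'in] by (simp add: span_insert_span)
  have ch: "ichain smul (span (vl ` S')) (span (insert (vl q') (span (vl ` S')))) (ell q')"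
  proof -
    have "span (vl ` S') \<subseteq> span (insert (vl q') (span (vl ` S')))"
      by (rule span_mono) (use span_superset in blast)
    then show ?thesis unfolding ellq' by (intro ilen_chain[OF fl']) auto
  qed
  have ki: "Suc k \<in> {1..m}" using k by simp
  show ?thesis unfolding q'_def[symmetric] ellq
  proof (rule shift_len[OF _ _ _ _ refl refl _ _ fl ch])
    show "\<And>x y. T (Suc k) (x + y) = T (Suc k) x + T (Suc k) y" by (rule T_add[OF ki])
    show "\<And>c x. T (Suc k) (smul c x) = smul c (T (Suc k) x)" by (rule T_smul[OF ki])
    show "T (Suc k) (vl q) = vl q'" unfolding q'_def upd_def by (rule vl_T[OF q k])
    fix x assume x: "x \<in> span (vl ` S)"
    show "T (Suc k) x \<in> span (vl ` S')"
    proof (rule T_span[OF ki _ x])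
      fix y assume "y \<in> vl ` S"
      then obtain x0 where x0: "x0 \<in> S" "y = vl x0" by blast
      then have x0l: "x0 \<in> labs" "ldeg x0 = p" "lless x0 q" by (auto simp: S_def Lp_def)
      have "upd x0 k \<in> S'"
        using labs_upd[OF x0l(1)] ldeg_upd[OF x0l(1) k] lless_upd[OF x0l(3)] x0l(2) p'
        unfolding S'_def Lp_def q'_def upd_def by simp
      moreover have "T (Suc k) y = vl (upd x0 k)" unfolding x0(2) upd_def by (rule vl_T[OF x0l(1) k])
      ultimately show "T (Suc k) y \<in> span (vl ` S')" by (auto intro: span_base)
    qed
  qed simp_all
qed

lemma ell_mono:
  assumes "(j, a) \<in> labs" "lle a b"
  shows "ell (j, b) \<le> ell (j, a)"
proof -
  have "\<forall>b. lle a b \<longrightarrow> sum_list b - sum_list a = n \<longrightarrow> ell (j, b) \<le> ell (j, a)" for n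
  proof (induction n)
    case 0
    show ?case
    proof (intro allI impI)
      fix b assume b: "lle a b" "sum_list b - sum_list a = 0"
      have "a = b"
      proof (rule ccontr)
        assume "a \<noteq> b"
        then obtain k where k: "k < length a" "a ! k < b ! k" using lle_neq b(1) by blast
        have lb: "length b = length a" using lle_length[OF b(1)] by simp
        have "lle a (b[k := b ! k - 1])" using lle_dec[OF b(1)] k lb by simp
        then have "sum_list a \<le> sum_list (b[k := b ! k - 1])" by (rule lle_sum)
        moreover have "sum_list (b[k := b ! k - 1]) + b ! k = sum_list b + (b ! k - 1)"
          using sum_list_update_nat[of k b] k lb by simp
        ultimately show False using b(2) k by simp
      qed
      then show "ell (j, b) \<le> ell (j, a)" by simp
    qed
  next
    case (Suc n)
    show ?case
    proof (intro allI impI)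
      fix b assume b: "lle a b" "sum_list b - sum_list a = Suc n"
      then have "a \<noteq> b" by auto
      then obtain k where k: "k < length a" "a ! k < b ! k" using lle_neq b(1) by blast
      have lb: "length b = length a" using lle_length[OF b(1)] by simp
      define b0 where "b0 = b[k := b ! k - 1]"
      have l0: "lle a b0" unfolding b0_def using lle_dec[OF b(1)] k lb by simp
      have "sum_list b0 + b ! k = sum_list b + (b ! k - 1)"
        unfolding b0_def using sum_list_update_nat[of k b] k lb by simp
      then have s0: "sum_list b0 - sum_list a = n" using b(2) k lle_sum[OF l0] by simp
      have IH: "ell (j, b0) \<le> ell (j, a)" using Suc.IH l0 s0 by blast
      have "(j, b0) \<in> labs" using assms(1) lle_length[OF l0] by (simp add: labs_def)
      moreover have "k < m" using assms(1) k by (simp add: labs_def)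
      ultimately have "ell (upd (j, b0) k) \<le> ell (j, b0)" by (rule ell_mono1)
      moreover have "upd (j, b0) k = (j, b)" unfolding upd_def b0_def using k lb by auto
      ultimately show "ell (j, b) \<le> ell (j, a)" using IH by simp
    qed
  qed
  then show ?thesis using assms(2) by blast
qed

end


lemma sum_list_concat': "sum_list (concat xss) = sum_list (map sum_list xss)"
  by (induction xss) auto

lemma sum_list_map_concat': "sum_list (map f (concat xss)) = sum_list (map (\<lambda>xs. sum_list (map f xs)) xss)"
  by (induction xss) auto

lemma sum_upt1: "(\<Sum>t\<in>{1..B}. g t) = sum_list (map g [1..<Suc B])"
proof -
  have "{1..B} = set [1..<Suc B]" by auto
  then show ?thesis by (simp only: sum_set_upt_conv_sum_list_nat)
qed

lemma sum_upt0: "(\<Sum>t\<in>{..<B}. g t) = sum_list (map g [0..<B])"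
proof -
  have "{..<B} = set [0..<B]" by auto
  then show ?thesis by (simp only: sum_set_upt_conv_sum_list_nat)
qed

lemma sum_sum_list_swap:
  "(\<Sum>a\<in>A. sum_list (map (g a) C)) = sum_list (map (\<lambda>c. \<Sum>a\<in>A. g a c) C)"
  by (induction C) (auto simp: sum.distrib)

lemma sum_ind_card: "finite A \<Longrightarrow> (\<Sum>a\<in>A. (if P a then 1 else 0) :: int) = int (card {a\<in>A. P a})"
  by (simp add: sum.inter_filter[symmetric])

lemma cnt_sum: "int (cnt C a) = sum_list (map (\<lambda>cb. if incone (fst cb) (snd cb) a then 1 else 0) C)"
  unfolding cnt_def by (induction C) auto

lemma sum_le_ind: "(l::nat) \<le> B \<Longrightarrow> (\<Sum>t\<in>{1..B}. (if t \<le> l then 1 else 0) :: int) = int l"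
proof -
  assume "l \<le> B"
  then have "{t\<in>{1..B}. t \<le> l} = {1..l}" by auto
  then show ?thesis using sum_ind_card[of "{1..B}" "\<lambda>t. t \<le> l"] by simp
qed

context bghf
begin

definition Bj :: "nat \<Rightarrow> nat" where "Bj j = ell (j, replicate m 0)"

definition Dset :: "nat \<Rightarrow> nat \<Rightarrow> nat list set" where
  "Dset j t = {a. length a = m \<and> t \<le> ell (j, a)}"

lemma Dset_down: "j < length hs \<Longrightarrow> downset (Dset j t)"
  unfolding downset_def Dset_def
proof (intro allI impI)
  fix a b assume j: "j < length hs" and b: "b \<in> {a. length a = m \<and> t \<le> ell (j, a)}" and ab: "lle a b"
  have la: "length a = m" using lle_length[OF ab] b by simp
  then have "(j, a) \<in> labs" using j by (simp add: labs_def)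
  then have "ell (j, b) \<le> ell (j, a)" using ell_mono ab by blast
  then show "a \<in> {a. length a = m \<and> t \<le> ell (j, a)}" using b la by simp
qed

lemma ell_le_Bj: "(j, a) \<in> labs \<Longrightarrow> ell (j, a) \<le> Bj j"
proof -
  assume q: "(j, a) \<in> labs"
  have "(j, replicate m 0) \<in> labs" using q by (simp add: labs_def)
  moreover have "lle (replicate m 0) a" using q unfolding labs_def lle_def
    by (auto simp: list_all2_conv_all_nth)
  ultimately show ?thesis unfolding Bj_def by (rule ell_mono)
qed

lemma series_exists:
  "\<exists>R :: (nat set \<times> (int \<times> int)) list. (\<forall>r\<in>set R. fst r \<subseteq> {1..m}) \<and>
     (\<forall>p. int (ilen smul {0} (G p)) = sum_list (map (\<lambda>r. geom_prod f2 (fst r) (fst p - fst (snd r), snd p - snd (snd r))) R))"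
proof -
  have "\<forall>jt. \<exists>C. fst jt < length hs \<longrightarrow> ((\<forall>cb\<in>set C. length (fst cb) = m \<and> snd cb \<subseteq> {..<m})
      \<and> (\<forall>a. length a = m \<longrightarrow> cnt C a = (if a \<in> Dset (fst jt) (snd jt) then 1 else 0)))"
  proof
    fix jt :: "nat \<times> nat"
    show "\<exists>C. fst jt < length hs \<longrightarrow> ((\<forall>cb\<in>set C. length (fst cb) = m \<and> snd cb \<subseteq> {..<m})
      \<and> (\<forall>a. length a = m \<longrightarrow> cnt C a = (if a \<in> Dset (fst jt) (snd jt) then 1 else 0)))"
    proof (cases "fst jt < length hs")
      case True
      have "Dset (fst jt) (snd jt) \<subseteq> {a. length a = m}" by (auto simp: Dset_def)
      from stanley[OF this Dset_down[OF True]] show ?thesis by blast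
    qed simp
  qed
  then obtain CS0 where CS0: "\<forall>jt. fst jt < length hs \<longrightarrow> ((\<forall>cb\<in>set (CS0 jt). length (fst cb) = m \<and> snd cb \<subseteq> {..<m})
      \<and> (\<forall>a. length a = m \<longrightarrow> cnt (CS0 jt) a = (if a \<in> Dset (fst jt) (snd jt) then 1 else 0)))"
    by (rule choice[elim_format]) blast
  define CS where "CS j t = CS0 (j, t)" for j t
  have CS1: "\<And>cb. j < length hs \<Longrightarrow> cb \<in> set (CS j t) \<Longrightarrow> length (fst cb) = m \<and> snd cb \<subseteq> {..<m}" for j t
    using CS0 unfolding CS_def by fastforce
  have CS2: "\<And>a. j < length hs \<Longrightarrow> length a = m \<Longrightarrow> cnt (CS j t) a = (if a \<in> Dset j t then 1 else 0)" for j t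
    using CS0 unfolding CS_def by fastforce
  define h1 where "h1 j = fst (snd (hs ! j))" for j
  define h2 where "h2 j = snd (snd (hs ! j))" for j
  define F where "F r p = geom_prod f2 (fst r) (fst p - fst (snd r), snd p - snd (snd r))"
    for r :: "nat set \<times> (int \<times> int)" and p :: "int \<times> int"
  define mk where "mk j cb = ((+) 1 ` snd cb, (h1 j + int (sum_list (fst cb)), h2 j + int (wdeg f2 1 (fst cb))))"
    for j and cb :: "nat list \<times> nat set"
  define R where "R = concat (map (\<lambda>j. concat (map (\<lambda>t. map (mk j) (CS j t)) [1..<Suc (Bj j)])) [0..<length hs])"
  have Rset: "\<forall>r\<in>set R. fst r \<subseteq> {1..m}"
  proof
    fix r assume "r \<in> set R"
    then obtain j t cb where "j < length hs" "cb \<in> set (CS j t)" "r = mk j cb"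
      unfolding R_def by auto
    then show "fst r \<subseteq> {1..m}" using CS1 by (fastforce simp: mk_def)
  qed
  define A where "A j p = {a. length a = m \<and> ldeg (j, a) = p}" for j p
  have Lp_Sig: "Lp p = Sigma {..<length hs} (\<lambda>j. A j p)" for p
    unfolding Lp_def labs_def A_def by auto
  have finA: "finite (A j p)" if "j < length hs" for j p
  proof -
    have "A j p \<subseteq> snd ` Lp p" using that unfolding Lp_Sig by force
    then show ?thesis using finite_Lp finite_subset by blast
  qed
  have cone: "(\<Sum>a\<in>A j p. (if incone (fst cb) (snd cb) a then 1 else 0) :: int) = F (mk j cb) p"
    if j: "j < length hs" and cb: "cb \<in> set (CS j t)" for j t cb p
  proof -
    have lcb: "length (fst cb) = m" "snd cb \<subseteq> {..<m}" using CS1[OF j cb] by auto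
    have "{a\<in>A j p. incone (fst cb) (snd cb) a} = {a. incone (fst cb) (snd cb) a \<and>
        int (sum_list a) = fst p - h1 j \<and> int (wdeg f2 1 a) = snd p - h2 j}"
      unfolding A_def ldeg_def h1_def h2_def using incone_length[of "fst cb" "snd cb"] lcb
      by (auto simp: prod_eq_iff)
    then have "(\<Sum>a\<in>A j p. (if incone (fst cb) (snd cb) a then 1 else 0) :: int)
      = int (card {a. incone (fst cb) (snd cb) a \<and> int (sum_list a) = fst p - h1 j \<and> int (wdeg f2 1 a) = snd p - h2 j})"
      using sum_ind_card[OF finA[OF j]] by simp
    also have "\<dots> = geom_prod f2 ((+) 1 ` snd cb) (fst p - h1 j - int (sum_list (fst cb)), snd p - h2 j - int (wdeg f2 1 (fst cb)))"
      by (rule cone_count) (use lcb in simp)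
    also have "\<dots> = F (mk j cb) p" unfolding F_def mk_def by (simp add: algebra_simps)
    finally show ?thesis .
  qed
  have main: "int (ilen smul {0} (G p)) = sum_list (map (\<lambda>r. F r p) R)" for p
  proof -
    have "int (ilen smul {0} (G p)) = (\<Sum>q\<in>Lp p. int (ell q))"
      using ml_sum[OF flG[rule_format, of p]] by simp
    also have "\<dots> = (\<Sum>j\<in>{..<length hs}. \<Sum>a\<in>A j p. int (ell (j, a)))"
    proof -
      have "(\<Sum>j\<in>{..<length hs}. \<Sum>a\<in>A j p. int (ell (j, a))) = (\<Sum>q\<in>Sigma {..<length hs} (\<lambda>j. A j p). int (ell q))"
        using sum.Sigma[of "{..<length hs}" "\<lambda>j. A j p" "\<lambda>j a. int (ell (j, a))"] finA
        by (simp add: case_prod_beta')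
      then show ?thesis unfolding Lp_Sig by simp
    qed
    also have "\<dots> = (\<Sum>j\<in>{..<length hs}. \<Sum>a\<in>A j p. \<Sum>t\<in>{1..Bj j}.
        sum_list (map (\<lambda>cb. if incone (fst cb) (snd cb) a then 1 else 0) (CS j t)))"
    proof (intro sum.cong refl)
      fix j a assume j: "j \<in> {..<length hs}" and a: "a \<in> A j p"
      have la: "length a = m" using a by (simp add: A_def)
      have lab: "(j, a) \<in> labs" using j la by (simp add: labs_def)
      have "int (ell (j, a)) = (\<Sum>t\<in>{1..Bj j}. (if t \<le> ell (j, a) then 1 else 0))"
        using sum_le_ind[OF ell_le_Bj[OF lab]] by simp
      also have "\<dots> = (\<Sum>t\<in>{1..Bj j}. int (cnt (CS j t) a))"
        using CS2 j la by (intro sum.cong refl) (auto simp: Dset_def)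
      finally show "int (ell (j, a)) = (\<Sum>t\<in>{1..Bj j}.
        sum_list (map (\<lambda>cb. if incone (fst cb) (snd cb) a then 1 else 0) (CS j t)))"
        by (simp add: cnt_sum)
    qed
    also have "\<dots> = (\<Sum>j\<in>{..<length hs}. \<Sum>t\<in>{1..Bj j}. sum_list (map (\<lambda>cb. F (mk j cb) p) (CS j t)))"
    proof (intro sum.cong refl)
      fix j assume j: "j \<in> {..<length hs}"
      have "(\<Sum>a\<in>A j p. \<Sum>t\<in>{1..Bj j}. sum_list (map (\<lambda>cb. if incone (fst cb) (snd cb) a then 1 else 0) (CS j t)))
        = (\<Sum>t\<in>{1..Bj j}. \<Sum>a\<in>A j p. sum_list (map (\<lambda>cb. if incone (fst cb) (snd cb) a then 1 else 0) (CS j t)))"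
        by (rule sum.swap)
      also have "\<dots> = (\<Sum>t\<in>{1..Bj j}. sum_list (map (\<lambda>cb. \<Sum>a\<in>A j p. if incone (fst cb) (snd cb) a then 1 else 0) (CS j t)))"
        by (simp add: sum_sum_list_swap)
      also have "\<dots> = (\<Sum>t\<in>{1..Bj j}. sum_list (map (\<lambda>cb. F (mk j cb) p) (CS j t)))"
      proof (intro sum.cong refl arg_cong[where f=sum_list] map_cong)
        fix t cb assume "cb \<in> set (CS j t)"
        then show "(\<Sum>a\<in>A j p. if incone (fst cb) (snd cb) a then 1 else 0) = F (mk j cb) p"
          using cone j by simp
      qed
      finally show "(\<Sum>a\<in>A j p. \<Sum>t\<in>{1..Bj j}. sum_list (map (\<lambda>cb. if incone (fst cb) (snd cb) a then 1 else 0) (CS j t)))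
        = (\<Sum>t\<in>{1..Bj j}. sum_list (map (\<lambda>cb. F (mk j cb) p) (CS j t)))" .
    qed
    also have "\<dots> = sum_list (map (\<lambda>r. F r p) R)"
      unfolding R_def sum_list_map_concat' map_map o_def sum_upt1 sum_upt0 ..
    finally show ?thesis .
  qed
  show ?thesis using Rset main unfolding F_def by blast
qed

end


lemma sum_list_count_int:
  "sum_list (map (f :: 'x \<Rightarrow> int) xs) = (\<Sum>x\<in>set xs. int (count_list xs x) * f x)"
proof (induction xs)
  case (Cons y ys)
  have "(\<Sum>x\<in>set (y # ys). int (count_list (y # ys) x) * f x)
      = (\<Sum>x\<in>insert y (set ys). int (count_list ys x) * f x + (if x = y then f x else 0))"
    by (intro sum.cong) (auto simp: algebra_simps)
  also have "\<dots> = (\<Sum>x\<in>insert y (set ys). int (count_list ys x) * f x) + f y"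
    by (simp add: sum.distrib sum.delta)
  also have "(\<Sum>x\<in>insert y (set ys). int (count_list ys x) * f x) = (\<Sum>x\<in>set ys. int (count_list ys x) * f x)"
    by (cases "y \<in> set ys") (auto simp: insert_absorb)
  finally show ?case using Cons by simp
qed simp

lemma assemble:
  fixes R :: "(nat set \<times> (int \<times> int)) list" and Gf :: "nat set \<Rightarrow> int \<times> int \<Rightarrow> int"
  assumes Rs: "\<forall>r\<in>set R. fst r \<subseteq> {1..(m::nat)}"
  defines "I \<equiv> \<lambda>\<alpha> q. int (count_list R (\<alpha>, q))"
    and "h \<equiv> Max (insert 0 (card ` fst ` set R))"
  shows "(\<forall>\<alpha>. finite {q. I \<alpha> q \<noteq> 0}) \<and>
    (\<forall>p. sum_list (map (\<lambda>r. Gf (fst r) (fst p - fst (snd r), snd p - snd (snd r))) R) =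
       (\<Sum>r\<le>h. \<Sum>\<alpha>\<in>{\<alpha>. \<alpha> \<subseteq> {1..m} \<and> card \<alpha> = r}. ls_mult (I \<alpha>) (Gf \<alpha>) p)) \<and>
    (R \<noteq> [] \<longrightarrow> (\<exists>\<alpha>. \<alpha> \<subseteq> {1..m} \<and> card \<alpha> = h \<and> I \<alpha> \<noteq> (\<lambda>_. 0)))"
proof (intro conjI allI impI)
  define Q where "Q \<alpha> = {q. (\<alpha>, q) \<in> set R}" for \<alpha>
  have finQ: "finite (Q \<alpha>)" for \<alpha>
  proof -
    have "Q \<alpha> \<subseteq> snd ` set R" unfolding Q_def by force
    then show ?thesis using finite_subset by blast
  qed
  have IQ: "I \<alpha> q \<noteq> 0 \<Longrightarrow> q \<in> Q \<alpha>" for \<alpha> q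
    unfolding I_def Q_def by (auto simp: count_list_0_iff)
  show "finite {q. I \<alpha> q \<noteq> 0}" for \<alpha>
    by (rule finite_subset[OF _ finQ[of \<alpha>]]) (use IQ in blast)
  fix p :: "int \<times> int"
  define X where "X \<alpha> = ls_mult (I \<alpha>) (Gf \<alpha>) p" for \<alpha>
  have X: "X \<alpha> = (\<Sum>q\<in>Q \<alpha>. I \<alpha> q * Gf \<alpha> (fst p - fst q, snd p - snd q))" for \<alpha>
  proof -
    obtain n d where p: "p = (n, d)" by (cases p)
    have "X \<alpha> = (\<Sum>q\<in>{q. I \<alpha> q \<noteq> 0 \<and> Gf \<alpha> (n - fst q, d - snd q) \<noteq> 0}. I \<alpha> q * Gf \<alpha> (n - fst q, d - snd q))"
      unfolding X_def ls_mult_def p by simp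
    also have "\<dots> = (\<Sum>q\<in>Q \<alpha>. I \<alpha> q * Gf \<alpha> (n - fst q, d - snd q))"
      by (rule sum.mono_neutral_left) (use finQ IQ in auto)
    finally show ?thesis using p by simp
  qed
  have X0: "X \<alpha> = 0" if "\<alpha> \<notin> fst ` set R" for \<alpha>
  proof -
    have "Q \<alpha> = {}" using that unfolding Q_def by force
    then show ?thesis unfolding X by simp
  qed
  define S where "S = {\<alpha>. \<alpha> \<subseteq> {1..m} \<and> card \<alpha> \<le> h}"
  have finS: "finite S" unfolding S_def by (rule finite_subset[of _ "Pow {1..m}"]) auto
  have RS: "fst ` set R \<subseteq> S"
  proof
    fix \<alpha> assume a: "\<alpha> \<in> fst ` set R"
    then have "card \<alpha> \<le> h" unfolding h_def by (intro Max_ge) auto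
    then show "\<alpha> \<in> S" using Rs a unfolding S_def by auto
  qed
  have "(\<Sum>r\<le>h. \<Sum>\<alpha>\<in>{\<alpha>. \<alpha> \<subseteq> {1..m} \<and> card \<alpha> = r}. X \<alpha>) = (\<Sum>r\<in>{..h}. \<Sum>\<alpha>\<in>{\<alpha>\<in>S. card \<alpha> = r}. X \<alpha>)"
    by (intro sum.cong refl) (auto simp: S_def)
  also have "\<dots> = (\<Sum>\<alpha>\<in>S. X \<alpha>)"
    by (rule sum.group) (use finS in \<open>auto simp: S_def\<close>)
  also have "\<dots> = (\<Sum>\<alpha>\<in>fst ` set R. X \<alpha>)"
    by (rule sum.mono_neutral_right[OF finS RS]) (use X0 in auto)
  also have "\<dots> = (\<Sum>\<alpha>\<in>fst ` set R. \<Sum>q\<in>Q \<alpha>. int (count_list R (\<alpha>, q)) * Gf \<alpha> (fst p - fst q, snd p - snd q))"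
    unfolding X I_def ..
  also have "\<dots> = (\<Sum>x\<in>Sigma (fst ` set R) Q. int (count_list R x) * Gf (fst x) (fst p - fst (snd x), snd p - snd (snd x)))"
    by (subst sum.Sigma) (auto simp: finQ split_def)
  also have "Sigma (fst ` set R) Q = set R" unfolding Q_def by force
  also have "(\<Sum>x\<in>set R. int (count_list R x) * Gf (fst x) (fst p - fst (snd x), snd p - snd (snd x)))
      = sum_list (map (\<lambda>r. Gf (fst r) (fst p - fst (snd r), snd p - snd (snd r))) R)"
    by (rule sum_list_count_int[symmetric])
  finally show "sum_list (map (\<lambda>r. Gf (fst r) (fst p - fst (snd r), snd p - snd (snd r))) R) =
       (\<Sum>r\<le>h. \<Sum>\<alpha>\<in>{\<alpha>. \<alpha> \<subseteq> {1..m} \<and> card \<alpha> = r}. ls_mult (I \<alpha>) (Gf \<alpha>) p)"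
    unfolding X_def by simp
next
  assume "R \<noteq> []"
  then have ne: "card ` fst ` set R \<noteq> {}" by simp
  have "h = Max (card ` fst ` set R)" unfolding h_def
    using Max_insert[OF _ ne, of 0] by simp
  then have "h \<in> card ` fst ` set R" using Max_in[OF _ ne] by simp
  then obtain \<alpha> q where aq: "(\<alpha>, q) \<in> set R" "card \<alpha> = h" by force
  have "I \<alpha> q \<noteq> 0" using aq unfolding I_def by (simp add: count_list_0_iff)
  then have "I \<alpha> \<noteq> (\<lambda>_. 0)" by force
  then show "\<exists>\<alpha>. \<alpha> \<subseteq> {1..m} \<and> card \<alpha> = h \<and> I \<alpha> \<noteq> (\<lambda>_. 0)"
    using aq Rs by force
qed


theorem mainTheorem18:
  fixes smul :: "'a::comm_ring_1 \<Rightarrow> 'b::ab_group_add \<Rightarrow> 'b"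
    and m :: nat
    and T :: "nat \<Rightarrow> 'b \<Rightarrow> 'b"
    and f2 :: "nat \<Rightarrow> nat"
    and G :: "int \<times> int \<Rightarrow> 'b set"
  assumes "poly_module smul m T"
    and "bigraded smul m T f2 G"
    and "finitely_generated smul m T"
    and "\<forall>p. finite_length smul (G p)"
  shows "\<exists>(h::nat) (I :: nat set \<Rightarrow> int \<times> int \<Rightarrow> int).
     (\<forall>\<alpha>. \<alpha> \<subseteq> {1..m} \<and> card \<alpha> \<le> h \<longrightarrow> finite {p. I \<alpha> p \<noteq> 0}) \<and>
     poincare_series smul G =
       (\<lambda>p. \<Sum>r\<le>h. \<Sum>\<alpha>\<in>{\<alpha>. \<alpha> \<subseteq> {1..m} \<and> card \<alpha> = r}. ls_mult (I \<alpha>) (geom_prod f2 \<alpha>) p) \<and>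
     (\<forall>\<alpha>. \<alpha> \<subseteq> {1..m} \<and> card \<alpha> = h \<longrightarrow> (\<forall>p. I \<alpha> p \<ge> 0)) \<and>
     ((\<exists>x::'b. x \<noteq> 0) \<longrightarrow> (\<exists>\<alpha>. \<alpha> \<subseteq> {1..m} \<and> card \<alpha> = h \<and> I \<alpha> \<noteq> (\<lambda>_. 0)))"
proof -
  interpret bgm smul m T f2 G using assms(1,2) by (rule bgm.intro)
  obtain hs where hs: "\<forall>hq\<in>set hs. fst hq \<in> G (snd hq)" "gen_submod smul m T (fst ` set hs) = UNIV"
    using hom_gens[OF assms(3)] by blast
  have flG: "\<forall>p. flen smul {0} (G p)" using assms(4) by (simp add: finite_length_flen)
  interpret bghf smul m T f2 G hs
    by (rule bghf.intro[OF bgh.intro[OF bgm.intro[OF assms(1,2)] bgh_axioms.intro[OF hs]] bghf_axioms.intro[OF flG]])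
  obtain R where R: "\<forall>r\<in>set R. fst r \<subseteq> {1..m}"
    "\<forall>p. int (ilen smul {0} (G p)) = sum_list (map (\<lambda>r. geom_prod f2 (fst r) (fst p - fst (snd r), snd p - snd (snd r))) R)"
    using series_exists by blast
  define I where "I = (\<lambda>\<alpha> q. int (count_list R (\<alpha>, q)))"
  define h where "h = Max (insert 0 (card ` fst ` set R))"
  have A: "(\<forall>\<alpha>. finite {q. I \<alpha> q \<noteq> 0}) \<and>
    (\<forall>p. sum_list (map (\<lambda>r. geom_prod f2 (fst r) (fst p - fst (snd r), snd p - snd (snd r))) R) =
       (\<Sum>r\<le>h. \<Sum>\<alpha>\<in>{\<alpha>. \<alpha> \<subseteq> {1..m} \<and> card \<alpha> = r}. ls_mult (I \<alpha>) (geom_prod f2 \<alpha>) p)) \<and>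
    (R \<noteq> [] \<longrightarrow> (\<exists>\<alpha>. \<alpha> \<subseteq> {1..m} \<and> card \<alpha> = h \<and> I \<alpha> \<noteq> (\<lambda>_. 0)))"
    unfolding I_def h_def by (rule assemble[OF R(1)])
  have Rne: "R \<noteq> []" if ex: "\<exists>x::'b. x \<noteq> 0"
  proof
    assume R0: "R = []"
    obtain x :: 'b where x: "x \<noteq> 0" using ex by blast
    obtain c where c: "finite {p. c p \<noteq> 0}" "\<forall>p. c p \<in> G p" "x = (\<Sum>p\<in>{p. c p \<noteq> 0}. c p)"
      using G_decomp[of x] by blast
    have "{p. c p \<noteq> 0} \<noteq> {}"
    proof
      assume "{p. c p \<noteq> 0} = {}"
      then have "x = 0" using c(3) by (simp only: sum.empty)
      then show False using x by simp
    qed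
    then obtain p where p: "c p \<noteq> 0" by blast
    have "{0} \<subset> G p" using subspace_0[OF G_sub] c(2) p by blast
    then have "ichain smul {0} (G p) 1"
      by (intro ichain_1 G_sub) simp_all
    then have "1 \<le> ilen smul {0} (G p)" using ilen_ge flG by blast
    moreover have "int (ilen smul {0} (G p)) = 0" using R(2)[rule_format, of p] R0 by simp
    ultimately show False by simp
  qed
  show ?thesis
  proof (intro exI[of _ h] exI[of _ I] conjI allI impI)
    show "\<And>\<alpha>. \<alpha> \<subseteq> {1..m} \<and> card \<alpha> \<le> h \<Longrightarrow> finite {p. I \<alpha> p \<noteq> 0}" using A by blast
    show "poincare_series smul G =
       (\<lambda>p. \<Sum>r\<le>h. \<Sum>\<alpha>\<in>{\<alpha>. \<alpha> \<subseteq> {1..m} \<and> card \<alpha> = r}. ls_mult (I \<alpha>) (geom_prod f2 \<alpha>) p)"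
    proof
      fix p
      show "poincare_series smul G p =
        (\<Sum>r\<le>h. \<Sum>\<alpha>\<in>{\<alpha>. \<alpha> \<subseteq> {1..m} \<and> card \<alpha> = r}. ls_mult (I \<alpha>) (geom_prod f2 \<alpha>) p)"
      proof -
        have A2: "sum_list (map (\<lambda>r. geom_prod f2 (fst r) (fst p - fst (snd r), snd p - snd (snd r))) R) =
          (\<Sum>r\<le>h. \<Sum>\<alpha>\<in>{\<alpha>. \<alpha> \<subseteq> {1..m} \<and> card \<alpha> = r}. ls_mult (I \<alpha>) (geom_prod f2 \<alpha>) p)"
          using A by blast
        show ?thesis unfolding poincare_series_def mod_length_ilen
          using R(2)[rule_format, of p] A2 by (simp only:)
      qed
    qed
    show "\<And>\<alpha> p. \<alpha> \<subseteq> {1..m} \<and> card \<alpha> = h \<Longrightarrow> 0 \<le> I \<alpha> p" by (simp add: I_def)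
    show "\<exists>x::'b. x \<noteq> 0 \<Longrightarrow> \<exists>\<alpha>. \<alpha> \<subseteq> {1..m} \<and> card \<alpha> = h \<and> I \<alpha> \<noteq> (\<lambda>_. 0)"
      using A Rne by blast
  qed
qed


end
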